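(* Let $G$ be the path on $k$ vertices and $n\ge 1$. Then $$W(\Gamma^G_n)=\frac{(k-1)^2(2k^2-2k-1)}{k^3(2k-1)}\,2^nk^{2n}+\frac{(k-1)(k-2)(k-3)}{3k^2}\,nk^{2n}-\frac{(k+1)(k-2)(k^2+2k-6)}{6k^3}\,k^{2n}+\frac{(k+1)(k-2)(2k-5)}{6k(2k-1)}\,k^n .$$
   Context: Let $G=(V,E)$ be a finite tree with vertex set $V$ of size $k$, and fix an orientation of each edge, so that each edge becomes an ordered pair $e=(s,t)$. Each oriented edge $e=(s,t)$ acts on the set $V^*$ of finite words over the alphabet $V$ by the recursive rule: $e(\emptyset)=\emptyset$, $e(sw)=t\,e(w)$, $e(tw)=sw$, and $e(xw)=xw$ for $x\in V\setminus\{s,t\}$ (words are read left to right, $w\in V^*$). This action preserves word length. For $n\ge 1$, the Schreier graph $\Gamma_n^G$ is the multigraph with vertex set $V^n$ having, for each $u\in V^n$ and each oriented edge $e$ of $G$, one edge joining $u$ and $e(u)$, labelled $e$ (a loop if $e(u)=u$). For a connected graph $H$, the Wiener index is $W(H)=\sum_{\{u,v\}}d_H(u,v)$ over unordered pairs of vertices. *)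

theory Defs
  imports Complex_Main
begin

fun edge_act :: "nat \<times> nat \<Rightarrow> nat list \<Rightarrow> nat list" where
  "edge_act (s, t) [] = []"
| "edge_act (s, t) (x # w) =
     (if x = s then t # edge_act (s, t) w
      else if x = t then s # w
      else x # w)"

definition words :: "nat set \<Rightarrow> nat \<Rightarrow> nat list set" where
  "words V n = {w. length w = n \<and> set w \<subseteq> V}"

text \<open>Adjacency relation (undirected, loops irrelevant for distances) of the
  Schreier graph Gamma_n for the oriented edge set E over vertex set V.\<close>
definition schreier_adj :: "nat set \<Rightarrow> (nat \<times> nat) set \<Rightarrow> nat \<Rightarrow> (nat list \<times> nat list) set" where
  "schreier_adj V E n =
     {(u, edge_act e u) | u e. u \<in> words V n \<and> e \<in> E}
     \<union> {(edge_act e u, u) | u e. u \<in> words V n \<and> e \<in> E}"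

definition graph_dist :: "('a \<times> 'a) set \<Rightarrow> 'a \<Rightarrow> 'a \<Rightarrow> nat" where
  "graph_dist R u v = (LEAST m. (u, v) \<in> R ^^ m)"

text \<open>Wiener index: sum of distances over unordered pairs of distinct vertices
  (= half the sum over ordered pairs, since d(u,u) = 0).\<close>
definition wiener :: "'a set \<Rightarrow> ('a \<times> 'a) set \<Rightarrow> real" where
  "wiener Vs R = real (\<Sum>u\<in>Vs. \<Sum>v\<in>Vs. graph_dist R u v) / 2"

definition path_edges :: "nat \<Rightarrow> (nat \<Rightarrow> bool) \<Rightarrow> (nat \<times> nat) set" where
  "path_edges k orient = {(if orient i then (i, i + 1) else (i + 1, i)) | i. i + 1 < k}"

end

theory Submission
  imports Defs
begin

fun P :: "nat \<Rightarrow> nat list \<Rightarrow> nat" where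
  "P i [] = 0"
| "P i (a # q) = (if set q \<subseteq> {i, Suc i} then (if i < a then 1 else 0) else P i q mod 2) + 2 * P i q"

lemma P_bound: "P i q < 2 ^ length q"
proof (induction q)
  case Nil then show ?case by simp
next
  case (Cons a q)
  have c: "(if set q \<subseteq> {i, Suc i} then (if i < a then 1 else 0) else P i q mod 2) \<le> (1::nat)" by auto
  have "P i (a # q) = (if set q \<subseteq> {i, Suc i} then (if i < a then 1 else 0) else P i q mod 2) + 2 * P i q"
    by simp
  also have "\<dots> < 2 ^ length (a # q)" using c Cons.IH by simp
  finally show ?case .
qed

lemma P_E_Cons: "set (a # q) \<subseteq> {i, Suc i} \<Longrightarrow> P i (a # q) = (if a = Suc i then 1 else 0) + 2 * P i q"
  by auto

lemma even_pow_mod: "p \<noteq> [] \<Longrightarrow> (x + 2 ^ length p * (y::nat)) mod 2 = x mod 2"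
proof -
  assume "p \<noteq> []"
  then obtain b r where "p = b # r" by (cases p) auto
  then have "(x + 2 ^ length p * (y::nat)) = x + 2 * (2 ^ length r * y)" by simp
  then show ?thesis by presburger
qed

lemma P_append:
  "P i (p @ s) = (if set s \<subseteq> {i, Suc i} then P i p + 2 ^ length p * P i s
                  else (if odd (P i s) then 2 ^ length p - 1 else 0) + 2 ^ length p * P i s)"
proof (induction p)
  case Nil then show ?case by simp
next
  case (Cons a p)
  show ?case
  proof (cases "set s \<subseteq> {i, Suc i}")
    case True
    have IH: "P i (p @ s) = P i p + 2 ^ length p * P i s" using Cons True by simp
    show ?thesis
    proof (cases "set p \<subseteq> {i, Suc i}")
      case True2: True
      then show ?thesis using True IH by (simp add: algebra_simps)
    next
      case False
      then have "p \<noteq> []" by auto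
      then have m: "P i (p @ s) mod 2 = P i p mod 2" using IH even_pow_mod by metis
      have "P i ((a # p) @ s) = P i (p @ s) mod 2 + 2 * P i (p @ s)" using False by simp
      also have "\<dots> = P i p mod 2 + 2 * P i p + 2 ^ length (a # p) * P i s" using m IH by simp
      also have "P i p mod 2 + 2 * P i p = P i (a # p)" using False by simp
      finally show ?thesis using True by simp
    qed
  next
    case False
    define c where "c = (if odd (P i s) then 1 else (0::nat))"
    have c1: "c \<le> 1" unfolding c_def by auto
    have pp: "P i (p @ s) = c * (2 ^ length p - 1) + 2 ^ length p * P i s" using Cons False
      unfolding c_def by simp
    have m2: "P i (p @ s) mod 2 = c"
    proof (cases p)
      case Nil then show ?thesis using pp c_def by (auto simp: odd_iff_mod_2_eq_one)
    next
      case (Cons b r)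
      have o: "odd ((2::nat) ^ length p - 1)" using Cons by simp
      have "P i (p @ s) mod 2 = (c * (2 ^ length p - 1)) mod 2" unfolding pp by (rule even_pow_mod) (simp add: Cons)
      also have "\<dots> = c"
      proof -
        have "c = 0 \<or> c = 1" using c1 by auto
        then show ?thesis
        proof
          assume "c = 1" then show ?thesis using o by (metis mult_1 odd_iff_mod_2_eq_one)
        qed simp
      qed
      finally show ?thesis .
    qed
    have ne: "\<not> set (p @ s) \<subseteq> {i, Suc i}" using False by auto
    have "P i ((a # p) @ s) = c + 2 * P i (p @ s)" using ne m2 False by simp
    also have "\<dots> = c * (2 * 2 ^ length p - 1) + 2 * 2 ^ length p * P i s"
    proof -
      have pos: "(1::nat) \<le> 2 ^ length p" by simp
      have "c = 0 \<or> c = 1" using c1 by auto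
      then show ?thesis
      proof
        assume c: "c = 1"
        have "c + 2 * P i (p @ s) = 1 + 2 * (2 ^ length p - 1) + 2 * (2 ^ length p * P i s)"
        proof -
          have pp1: "P i (p @ s) = (2 ^ length p - 1) + 2 ^ length p * P i s" using pp c by simp
          obtain M where M: "(2::nat) ^ length p = Suc M" using pos by (cases "(2::nat) ^ length p") auto
          show ?thesis unfolding c pp1 M by simp
        qed
        also have "\<dots> = 2 * 2 ^ length p - 1 + 2 * 2 ^ length p * P i s"
        proof -
          obtain M where M: "(2::nat) ^ length p = Suc M" using pos by (cases "(2::nat) ^ length p") auto
          show ?thesis unfolding M by simp
        qed
        finally show ?thesis using c by simp
      qed (simp add: pp)
    qed
    finally show ?thesis using False c_def by auto
  qed
qed

lemma P_other: "set q \<subseteq> {i0, Suc i0} \<Longrightarrow> i0 \<noteq> i \<Longrightarrow> P i q = (if i0 < i then 0 else 2 ^ length q - 1)"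
proof (induction q)
  case Nil then show ?case by simp
next
  case (Cons a q)
  then have IH: "P i q = (if i0 < i then 0 else 2 ^ length q - 1)" and a: "a = i0 \<or> a = Suc i0" by auto
  show ?case
  proof (cases "i0 < i")
    case True
    then have "\<not> i < a" using a by auto
    then show ?thesis using IH True by simp
  next
    case False
    then have ia: "i < a" using a Cons.prems by auto
    show ?thesis
    proof (cases "set q \<subseteq> {i, Suc i}")
      case True
      have "P i (a # q) = 1 + 2 * (2 ^ length q - 1)" using True ia IH False by simp
      also have "\<dots> = 2 ^ length (a # q) - 1"
      proof -
        obtain M where M: "(2::nat) ^ length q = Suc M" by (cases "(2::nat) ^ length q") auto
        show ?thesis using M by simp
      qed
      finally show ?thesis using False by simp
    next
      case F2: False
      then have "q \<noteq> []" by auto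
      then have "(2::nat) ^ length q \<ge> 2" by (cases q) auto
      then obtain M where M: "(2::nat) ^ length q = Suc (Suc M)"
        using nat_le_iff_add by (metis add_2_eq_Suc)
      have "P i (a # q) = (2 ^ length q - 1) mod 2 + 2 * (2 ^ length q - 1)" using F2 IH False by simp
      also have "\<dots> = 2 ^ length (a # q) - 1"
      proof -
        have "even ((2::nat) ^ length q)" using \<open>q \<noteq> []\<close> by (cases q) auto
        then have "even (Suc (Suc M))" using M by simp
        then have "Suc M mod 2 = 1" by presburger
        then show ?thesis using M by simp
      qed
      finally show ?thesis using False by simp
    qed
  qed
qed

lemma P_zero_iff: "set q \<subseteq> {i, Suc i} \<Longrightarrow> P i q = 0 \<longleftrightarrow> set q \<subseteq> {i}"
  by (induction q) auto

lemma P_full_iff: "set q \<subseteq> {i, Suc i} \<Longrightarrow> P i q = 2 ^ length q - 1 \<longleftrightarrow> set q \<subseteq> {Suc i}"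
proof (induction q)
  case Nil then show ?case by simp
next
  case (Cons a q)
  have b: "P i q < 2 ^ length q" by (rule P_bound)
  have pos: "(1::nat) \<le> 2 ^ length q" by simp
  have e: "P i (a # q) = (if a = Suc i then 1 else 0) + 2 * P i q" using Cons.prems by auto
  show ?case
  proof (cases "a = Suc i")
    case True
    obtain M where M: "(2::nat) ^ length q = Suc M" by (cases "(2::nat) ^ length q") auto
    have "P i (a # q) = 2 ^ length (a # q) - 1 \<longleftrightarrow> P i q = 2 ^ length q - 1"
      using e True M by auto
    then show ?thesis using Cons True by auto
  next
    case False
    then have "a \<notin> {Suc i}" by simp
    moreover have "P i (a # q) \<noteq> 2 ^ length (a # q) - 1"
    proof -
      have "P i (a # q) = 2 * P i q" using e False by simp
      moreover have "odd ((2::nat) ^ length (a # q) - 1)" by simp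
      ultimately show ?thesis by (metis dvd_triv_left)
    qed
    ultimately show ?thesis by simp
  qed
qed

lemma P_snoc_E: "a \<in> {i, Suc i} \<Longrightarrow> P i (q @ [a]) = P i q + 2 ^ length q * (if a = Suc i then 1 else 0)"
  by (subst P_append) auto

lemma P_snoc_nonE: "a \<notin> {i, Suc i} \<Longrightarrow> P i (q @ [a]) = (if i < a then 2 ^ Suc (length q) - 1 else 0)"
proof -
  assume a: "a \<notin> {i, Suc i}"
  have pa: "P i [a] = (if i < a then 1 else 0)" by simp
  have "P i (q @ [a]) = (if odd (P i [a]) then 2 ^ length q - 1 else 0) + 2 ^ length q * P i [a]"
    using a by (subst P_append) auto
  also have "\<dots> = (if i < a then 2 ^ Suc (length q) - 1 else 0)"
  proof -
    obtain M where M: "(2::nat) ^ length q = Suc M" by (cases "(2::nat) ^ length q") auto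
    show ?thesis unfolding pa using M by auto
  qed
  finally show ?thesis .
qed

lemma length_edge_act[simp]: "length (edge_act (s, t) u) = length u"
  by (induction u) auto

lemma set_edge_act: "set (edge_act (s, t) u) \<subseteq> set u \<union> {s, t}"
  by (induction u) auto

lemma set_edge_act_E: "set p \<subseteq> {s, t} \<Longrightarrow> set (edge_act (s, t) p) \<subseteq> {s, t}"
  using set_edge_act by blast

lemma edge_act_append: "set p \<subseteq> {s, t} \<Longrightarrow> (\<tau> = [] \<or> hd \<tau> \<notin> {s, t}) \<Longrightarrow>
   edge_act (s, t) (p @ \<tau>) = edge_act (s, t) p @ \<tau>"
proof (induction p)
  case Nil then show ?case by (cases \<tau>) auto
next
  case (Cons a p) then show ?case by auto
qed

lemma edge_act_inv: "s \<noteq> t \<Longrightarrow> edge_act (t, s) (edge_act (s, t) u) = u"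
  by (induction u) auto

lemma edge_act_nonE: "u = [] \<or> hd u \<notin> {s, t} \<Longrightarrow> edge_act (s, t) u = u"
  by (cases u) auto

lemma P_up: "set p \<subseteq> {i, Suc i} \<Longrightarrow>
   P i (edge_act (Suc i, i) p) = (if P i p + 1 = 2 ^ length p then 0 else P i p + 1)"
proof (induction p)
  case Nil then show ?case by simp
next
  case (Cons a q)
  have sq: "set q \<subseteq> {i, Suc i}" using Cons.prems by auto
  have b: "P i q < 2 ^ length q" by (rule P_bound)
  show ?case
  proof (cases "a = Suc i")
    case True
    have se: "set (edge_act (Suc i, i) q) \<subseteq> {i, Suc i}" using set_edge_act_E[of q "Suc i" i] sq by auto
    have "P i (edge_act (Suc i, i) (a # q)) = P i (i # edge_act (Suc i, i) q)" using True by simp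
    also have "\<dots> = 2 * P i (edge_act (Suc i, i) q)" using se by simp
    also have "\<dots> = 2 * (if P i q + 1 = 2 ^ length q then 0 else P i q + 1)" using Cons.IH sq by simp
    also have "\<dots> = (if P i (a # q) + 1 = 2 ^ length (a # q) then 0 else P i (a # q) + 1)"
      using True sq b by auto
    finally show ?thesis .
  next
    case False
    then have ai: "a = i" using Cons.prems by auto
    have "P i (edge_act (Suc i, i) (a # q)) = P i (Suc i # q)" using ai by simp
    also have "\<dots> = 1 + 2 * P i q" using sq by simp
    also have "\<dots> = (if P i (a # q) + 1 = 2 ^ length (a # q) then 0 else P i (a # q) + 1)"
      using ai sq b by auto
    finally show ?thesis .
  qed
qed

lemma P_down: "set p \<subseteq> {i, Suc i} \<Longrightarrow>
   P i (edge_act (i, Suc i) p) = (if P i p = 0 then 2 ^ length p - 1 else P i p - 1)"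
proof -
  assume sp: "set p \<subseteq> {i, Suc i}"
  let ?v = "edge_act (i, Suc i) p"
  have sv: "set ?v \<subseteq> {i, Suc i}" using set_edge_act_E[of p i "Suc i"] sp by auto
  have inv: "edge_act (Suc i, i) ?v = p" by (rule edge_act_inv) simp
  have "P i p = (if P i ?v + 1 = 2 ^ length ?v then 0 else P i ?v + 1)"
    using P_up[OF sv] inv by simp
  moreover have "P i ?v < 2 ^ length p" using P_bound[of i ?v] by simp
  ultimately show ?thesis by auto
qed

definition dst :: "nat \<Rightarrow> nat \<Rightarrow> nat" where "dst x y = (if x \<le> y then y - x else x - y)"
definition cdm :: "nat \<Rightarrow> nat \<Rightarrow> nat \<Rightarrow> nat" where "cdm M x y = min (dst x y) (M - dst x y)"
definition nxt :: "nat \<Rightarrow> nat \<Rightarrow> nat" where "nxt M x = (if x + 1 = M then 0 else x + 1)"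
definition prv :: "nat \<Rightarrow> nat \<Rightarrow> nat" where "prv M x = (if x = 0 then M - 1 else x - 1)"

lemma cdm_self[simp]: "cdm M x x = 0" by (simp add: cdm_def dst_def)
lemma cdm_sym: "cdm M x y = cdm M y x" by (simp add: cdm_def dst_def)

lemma cdm_nxt1: "x < M \<Longrightarrow> z < M \<Longrightarrow> cdm M (nxt M x) z \<le> cdm M x z + 1"
  unfolding cdm_def dst_def nxt_def min_def by (simp split: if_split) (intro conjI impI; arith)
lemma cdm_nxt2: "x < M \<Longrightarrow> z < M \<Longrightarrow> cdm M x z \<le> cdm M (nxt M x) z + 1"
  unfolding cdm_def dst_def nxt_def min_def by (simp split: if_split) (intro conjI impI; arith)
lemma nxt_prv: "x < M \<Longrightarrow> nxt M (prv M x) = x"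
  unfolding nxt_def prv_def by auto
lemma prv_less: "x < M \<Longrightarrow> prv M x < M"
  unfolding prv_def by auto
lemma nxt_less: "x < M \<Longrightarrow> nxt M x < M"
  unfolding nxt_def by auto
lemma cdm_prv1: "x < M \<Longrightarrow> z < M \<Longrightarrow> cdm M (prv M x) z \<le> cdm M x z + 1"
  using cdm_nxt2[of "prv M x" M z] nxt_prv[of x M] prv_less[of x M] by simp
lemma cdm_prv2: "x < M \<Longrightarrow> z < M \<Longrightarrow> cdm M x z \<le> cdm M (prv M x) z + 1"
  using cdm_nxt1[of "prv M x" M z] nxt_prv[of x M] prv_less[of x M] by simp
lemma cdm_dec: "x < M \<Longrightarrow> z < M \<Longrightarrow> x \<noteq> z \<Longrightarrow>
   cdm M (nxt M x) z + 1 = cdm M x z \<or> cdm M (prv M x) z + 1 = cdm M x z"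
proof -
  assume xm: "x < M" and zm: "z < M" and ne: "x \<noteq> z"
  show ?thesis
  proof (cases "x < z")
    case True
    show ?thesis
    proof (cases "2 * (z - x) \<le> M")
      case True
      have n: "nxt M x = x + 1" using \<open>x < z\<close> zm unfolding nxt_def by auto
      have "cdm M (nxt M x) z + 1 = cdm M x z" unfolding n cdm_def dst_def min_def
        using True \<open>x < z\<close> by (simp split: if_split) (intro conjI impI; arith)
      then show ?thesis by blast
    next
      case False
      have "cdm M (prv M x) z + 1 = cdm M x z" unfolding prv_def cdm_def dst_def min_def
        using False \<open>x < z\<close> zm by (simp split: if_split) (intro conjI impI; arith)
      then show ?thesis by blast
    qed
  next
    case False
    then have zx: "z < x" using ne by auto
    show ?thesis
    proof (cases "2 * (x - z) \<le> M")
      case True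
      have p: "prv M x = x - 1" using zx unfolding prv_def by auto
      have "cdm M (prv M x) z + 1 = cdm M x z" unfolding p cdm_def dst_def min_def
        using True zx by (simp split: if_split) (intro conjI impI; arith)
      then show ?thesis by blast
    next
      case False
      have "cdm M (nxt M x) z + 1 = cdm M x z" unfolding nxt_def cdm_def dst_def min_def
        using False zx xm by (simp split: if_split) (intro conjI impI; arith)
      then show ?thesis by blast
    qed
  qed
qed

definition dflt :: "nat \<Rightarrow> nat \<Rightarrow> nat list \<Rightarrow> nat" where
  "dflt i j \<tau> = (if hd \<tau> < i then 0 else 2 ^ j - 1)"

definition pos :: "nat \<Rightarrow> nat \<Rightarrow> nat list \<Rightarrow> nat list \<Rightarrow> nat" where
  "pos i j \<tau> w = (if drop j w = \<tau> then P i (take j w) else dflt i j \<tau>)"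

lemma pos_less: "pos i j \<tau> w < 2 ^ j"
proof -
  have "P i (take j w) < 2 ^ length (take j w)" by (rule P_bound)
  also have "\<dots> \<le> 2 ^ j" by simp
  finally show ?thesis unfolding pos_def dflt_def by auto
qed

lemma pos_same:
  assumes u: "u = p @ \<tau>0" and v: "v = p' @ \<tau>0" and lp: "length p' = length p"
    and sp: "set p \<subseteq> {i0, Suc i0}" and sp': "set p' \<subseteq> {i0, Suc i0}"
    and t0: "\<tau>0 = [] \<or> hd \<tau>0 \<notin> {i0, Suc i0}"
    and t: "\<tau> = [] \<or> hd \<tau> \<notin> {i, Suc i}"
    and lt: "length \<tau> + j = length u"
    and ne: "(i, j, \<tau>) \<noteq> (i0, length p, \<tau>0)"
  shows "pos i j \<tau> u = pos i j \<tau> v"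
proof (cases "length p \<le> j")
  case True
  note lj = True
  define \<sigma> where "\<sigma> = take (j - length p) \<tau>0"
  have du: "drop j u = drop (j - length p) \<tau>0" using u True by simp
  have dv: "drop j v = drop (j - length p) \<tau>0" using v True lp by simp
  have tu: "take j u = p @ \<sigma>" using u True unfolding \<sigma>_def by simp
  have tv: "take j v = p' @ \<sigma>" using v True lp unfolding \<sigma>_def by simp
  show ?thesis
  proof (cases "drop j u = \<tau>")
    case False
    then show ?thesis unfolding pos_def using du dv by simp
  next
    case dt: True
    have "P i (p @ \<sigma>) = P i (p' @ \<sigma>)"
    proof (cases "set \<sigma> \<subseteq> {i, Suc i}")
      case sE: True
      have "P i p = P i p'"
      proof (cases "i = i0")
        case True
        have "\<sigma> \<noteq> []"
        proof
          assume "\<sigma> = []"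
          moreover have "j - length p \<le> length \<tau>0" using lt u by simp
          ultimately have "j = length p" using lj unfolding \<sigma>_def by auto
          then have "\<tau> = \<tau>0" using dt u by simp
          then show False using ne True \<open>j = length p\<close> by simp
        qed
        then have "hd \<sigma> = hd \<tau>0" "\<tau>0 \<noteq> []" unfolding \<sigma>_def by (auto simp: hd_take)
        then have "hd \<sigma> \<notin> {i, Suc i}" using t0 True by simp
        then show ?thesis using sE \<open>\<sigma> \<noteq> []\<close> by (meson hd_in_set subsetD)
      next
        case False
        then show ?thesis using P_other[OF sp, of i] P_other[OF sp', of i] lp by simp
      qed
      then show ?thesis using sE lp by (simp add: P_append)
    next
      case False
      then show ?thesis using lp by (simp add: P_append)
    qed
    then show ?thesis unfolding pos_def using du dv tu tv by simp
  qed
next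
  case False
  then have jl: "j < length p" by simp
  define c where "c = (if i0 < i then 0 else 2 ^ j - 1::nat)"
  have du: "drop j u = drop j p @ \<tau>0" using u jl by simp
  have dv: "drop j v = drop j p' @ \<tau>0" using v jl lp by simp
  have "p ! j \<in> set p" using jl by simp
  then have "p ! j \<in> {i0, Suc i0}" using sp by blast
  then have hu: "hd (drop j u) \<in> {i0, Suc i0}" using du jl
    by (simp add: hd_drop_conv_nth)
  have "p' ! j \<in> set p'" using jl lp by simp
  then have "p' ! j \<in> {i0, Suc i0}" using sp' by blast
  then have hv: "hd (drop j v) \<in> {i0, Suc i0}" using dv jl lp
    by (simp add: hd_drop_conv_nth)
  have key: "i \<noteq> i0 \<and> dflt i j \<tau> = c" if h: "hd \<tau> \<in> {i0, Suc i0}" "\<tau> \<noteq> []"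
  proof -
    have hn: "hd \<tau> \<notin> {i, Suc i}" using t h by auto
    then have "i \<noteq> i0" using h by auto
    moreover have "dflt i j \<tau> = c" unfolding dflt_def c_def using h hn by auto
    ultimately show ?thesis by simp
  qed
  have pu: "drop j u = \<tau> \<Longrightarrow> pos i j \<tau> u = c"
  proof -
    assume d: "drop j u = \<tau>"
    then have "\<tau> \<noteq> []" using du jl by auto
    then have k: "i \<noteq> i0" using key hu d by auto
    have "set (take j p) \<subseteq> {i0, Suc i0}" using sp by (meson set_take_subset subset_trans)
    then have "P i (take j p) = c" using P_other[of "take j p" i0 i] k jl unfolding c_def by simp
    then show ?thesis unfolding pos_def using d u jl by simp
  qed
  have pv: "drop j v = \<tau> \<Longrightarrow> pos i j \<tau> v = c"
  proof -
    assume d: "drop j v = \<tau>"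
    then have "\<tau> \<noteq> []" using dv jl lp by auto
    then have k: "i \<noteq> i0" using key hv d by auto
    have "set (take j p') \<subseteq> {i0, Suc i0}" using sp' by (meson set_take_subset subset_trans)
    then have "P i (take j p') = c" using P_other[of "take j p'" i0 i] k jl lp unfolding c_def by simp
    then show ?thesis unfolding pos_def using d v jl lp by simp
  qed
  show ?thesis
  proof (cases "drop j u = \<tau> \<or> drop j v = \<tau>")
    case True
    then have "hd \<tau> \<in> {i0, Suc i0} \<and> \<tau> \<noteq> []"
    proof
      assume d: "drop j u = \<tau>"
      have "drop j p \<noteq> []" using jl by simp
      then have "\<tau> \<noteq> []" using du d by simp
      then show ?thesis using d hu by simp
    next
      assume d: "drop j v = \<tau>"
      have "drop j p' \<noteq> []" using jl lp by simp
      then have "\<tau> \<noteq> []" using dv d by simp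
      then show ?thesis using d hv by simp
    qed
    then have "dflt i j \<tau> = c" using key by auto
    have "pos i j \<tau> u = c"
    proof (cases "drop j u = \<tau>")
      case True then show ?thesis using pu by simp
    next
      case False then show ?thesis unfolding pos_def using \<open>dflt i j \<tau> = c\<close> by simp
    qed
    moreover have "pos i j \<tau> v = c"
    proof (cases "drop j v = \<tau>")
      case True then show ?thesis using pv by simp
    next
      case False then show ?thesis unfolding pos_def using \<open>dflt i j \<tau> = c\<close> by simp
    qed
    ultimately show ?thesis by simp
  next
    case False
    then show ?thesis unfolding pos_def by simp
  qed
qed

lemma finite_words: "finite (words {0..<k} m)"
proof -
  have "words {0..<k} m = {xs. set xs \<subseteq> {0..<k} \<and> length xs = m}" unfolding words_def by auto
  then show ?thesis using finite_lists_length_eq[of "{0..<k}" m] by simp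
qed

lemma card_words: "card (words {0..<k} m) = k ^ m"
proof -
  have "words {0..<k} m = {xs. set xs \<subseteq> {0..<k} \<and> length xs = m}" unfolding words_def by auto
  then show ?thesis using card_lists_length_eq[of "{0..<k}" m] by simp
qed

definition blocks :: "nat \<Rightarrow> nat \<Rightarrow> (nat \<times> nat \<times> nat list) set" where
  "blocks k n = {(i, j, \<tau>). Suc i < k \<and> j \<le> n \<and> \<tau> \<in> words {0..<k} (n - j) \<and> (\<tau> = [] \<or> hd \<tau> \<notin> {i, Suc i})}"

lemma finite_blocks: "finite (blocks k n)"
proof -
  have "blocks k n \<subseteq> {..<k} \<times> {..n} \<times> (\<Union>m\<le>n. words {0..<k} m)"
  proof
    fix B assume "B \<in> blocks k n"
    then obtain i j \<tau> where B: "B = (i, j, \<tau>)" "Suc i < k" "j \<le> n" "\<tau> \<in> words {0..<k} (n - j)"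
      unfolding blocks_def by auto
    then have "\<tau> \<in> (\<Union>m\<le>n. words {0..<k} m)" by (intro UN_I[of "n - j"]) auto
    then show "B \<in> {..<k} \<times> {..n} \<times> (\<Union>m\<le>n. words {0..<k} m)" using B by auto
  qed
  moreover have "finite ({..<k} \<times> {..n} \<times> (\<Union>m\<le>n. words {0..<k} m))"
    using finite_words by auto
  ultimately show ?thesis by (rule finite_subset)
qed

definition D :: "nat \<Rightarrow> nat \<Rightarrow> nat list \<Rightarrow> nat list \<Rightarrow> nat" where
  "D k n u w = (\<Sum>(i, j, \<tau>)\<in>blocks k n. cdm (2 ^ j) (pos i j \<tau> u) (pos i j \<tau> w))"

lemma D_self: "D k n u u = 0"
  unfolding D_def by simp

abbreviation tw :: "nat \<Rightarrow> nat list \<Rightarrow> nat list" where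
  "tw i u \<equiv> takeWhile (\<lambda>x. x \<in> {i, Suc i}) u"
abbreviation dw :: "nat \<Rightarrow> nat list \<Rightarrow> nat list" where
  "dw i u \<equiv> dropWhile (\<lambda>x. x \<in> {i, Suc i}) u"

lemma dw_hd: "dw i u = [] \<or> hd (dw i u) \<notin> {i, Suc i}"
  using hd_dropWhile[of "\<lambda>x. x \<in> {i, Suc i}" u] by auto

lemma tw_set: "set (tw i u) \<subseteq> {i, Suc i}"
  by (auto dest: set_takeWhileD)

lemma B0_in:
  assumes "u \<in> words {0..<k} n" "Suc i < k"
  shows "(i, length (tw i u), dw i u) \<in> blocks k n"
proof -
  have lu: "length u = n" using assms(1) unfolding words_def by simp
  have l: "length (tw i u) + length (dw i u) = n" using lu
    by (metis length_append takeWhile_dropWhile_id)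
  have "set (dw i u) \<subseteq> set u" by (simp add: set_dropWhileD subsetI)
  then have "dw i u \<in> words {0..<k} (n - length (tw i u))" using assms(1) l unfolding words_def by auto
  then show ?thesis unfolding blocks_def using assms l dw_hd[of i u] by auto
qed

lemma D_split:
  fixes w :: "nat list"
  assumes u: "u \<in> words {0..<k} n" and ik: "Suc i < k" and st: "{s, t} = {i, Suc i}"
  defines "p \<equiv> tw i u" and "\<tau>0 \<equiv> dw i u"
  defines "v \<equiv> edge_act (s, t) u"
  defines "Rest \<equiv> (\<Sum>(i', j, \<tau>)\<in>blocks k n - {(i, length p, \<tau>0)}. cdm (2 ^ j) (pos i' j \<tau> u) (pos i' j \<tau> w))"
  shows "D k n u w = cdm (2 ^ length p) (P i p) (pos i (length p) \<tau>0 w) + Rest"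
    and "D k n v w = cdm (2 ^ length p) (P i (edge_act (s, t) p)) (pos i (length p) \<tau>0 w) + Rest"
    and "v = edge_act (s, t) p @ \<tau>0"
    and "v \<in> words {0..<k} n"
proof -
  have uu: "u = p @ \<tau>0" unfolding p_def \<tau>0_def by simp
  have sp: "set p \<subseteq> {s, t}" using st tw_set unfolding p_def by metis
  have h0: "\<tau>0 = [] \<or> hd \<tau>0 \<notin> {s, t}" using st dw_hd unfolding \<tau>0_def by metis
  show vv: "v = edge_act (s, t) p @ \<tau>0" unfolding v_def uu using edge_act_append[OF sp h0] .
  have "s \<in> {i, Suc i}" "t \<in> {i, Suc i}" using st by blast+
  then have stk: "s < k" "t < k" using ik by auto
  show vw: "v \<in> words {0..<k} n" using u set_edge_act[of s t u] stk unfolding v_def words_def by auto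
  have B0: "(i, length p, \<tau>0) \<in> blocks k n" using B0_in[OF u ik] unfolding p_def \<tau>0_def .
  define f where "f x = (\<lambda>(i', j, \<tau>). cdm (2 ^ j) (pos i' j \<tau> x) (pos i' j \<tau> w))" for x
  have Du: "D k n u w = f u (i, length p, \<tau>0) + sum (f u) (blocks k n - {(i, length p, \<tau>0)})"
    unfolding D_def f_def using sum.remove[OF finite_blocks B0] by blast
  have Dv: "D k n v w = f v (i, length p, \<tau>0) + sum (f v) (blocks k n - {(i, length p, \<tau>0)})"
    unfolding D_def f_def using sum.remove[OF finite_blocks B0] by blast
  have lu: "length u = n" using u unfolding words_def by simp
  have eqr: "f u B = f v B" if B: "B \<in> blocks k n - {(i, length p, \<tau>0)}" for B
  proof -
    obtain i' j \<tau> where Bt: "B = (i', j, \<tau>)" by (cases B) auto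
    have c: "\<tau> = [] \<or> hd \<tau> \<notin> {i', Suc i'}" "length \<tau> + j = length u" "(i', j, \<tau>) \<noteq> (i, length p, \<tau>0)"
      using B Bt lu unfolding blocks_def words_def by auto
    have sp2: "set p \<subseteq> {i, Suc i}" using sp st by simp
    have sp': "set (edge_act (s, t) p) \<subseteq> {i, Suc i}" using set_edge_act_E[OF sp] st by simp
    have h0': "\<tau>0 = [] \<or> hd \<tau>0 \<notin> {i, Suc i}" using h0 st by simp
    have "pos i' j \<tau> u = pos i' j \<tau> v"
      by (rule pos_same[OF uu vv _ sp2 sp' h0' c]) simp
    then show ?thesis unfolding f_def Bt by simp
  qed
  have R: "Rest = sum (f u) (blocks k n - {(i, length p, \<tau>0)})"
    unfolding Rest_def f_def by simp
  have R': "Rest = sum (f v) (blocks k n - {(i, length p, \<tau>0)})"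
    unfolding R using eqr by (rule sum.cong[OF refl])
  have pu: "pos i (length p) \<tau>0 u = P i p" unfolding pos_def uu by simp
  have pv: "pos i (length p) \<tau>0 v = P i (edge_act (s, t) p)" unfolding pos_def vv
    by simp
  show "D k n u w = cdm (2 ^ length p) (P i p) (pos i (length p) \<tau>0 w) + Rest"
    using Du R pu unfolding f_def by simp
  show "D k n v w = cdm (2 ^ length p) (P i (edge_act (s, t) p)) (pos i (length p) \<tau>0 w) + Rest"
    using Dv R' pv unfolding f_def by simp
qed

lemma tw_snoc_all: "set u0 \<subseteq> {i, Suc i} \<Longrightarrow> a \<in> {i, Suc i} \<Longrightarrow> tw i (u0 @ [a]) = u0 @ [a] \<and> dw i (u0 @ [a]) = []"
  by (auto simp: takeWhile_append2 dropWhile_append2 subset_iff)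

lemma tw_snoc_last: "set u0 \<subseteq> {i, Suc i} \<Longrightarrow> a \<notin> {i, Suc i} \<Longrightarrow> tw i (u0 @ [a]) = u0 \<and> dw i (u0 @ [a]) = [a]"
  by (auto simp: takeWhile_append2 dropWhile_append2 subset_iff)

lemma tw_snoc_mid: "\<not> set u0 \<subseteq> {i, Suc i} \<Longrightarrow> tw i (u0 @ [a]) = tw i u0 \<and> dw i (u0 @ [a]) = dw i u0 @ [a] \<and> dw i u0 \<noteq> []"
proof -
  assume "\<not> set u0 \<subseteq> {i, Suc i}"
  then obtain x where x: "x \<in> set u0" "x \<notin> {i, Suc i}" by auto
  then show ?thesis using takeWhile_append1[of x u0 "\<lambda>x. x \<in> {i, Suc i}" "[a]"]
      dropWhile_append1[of x u0 "\<lambda>x. x \<in> {i, Suc i}" "[a]"]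
    by (auto simp: dropWhile_eq_Nil_conv)
qed

lemma pow2_Suc_ne: "(2::nat) ^ Suc m - 1 \<noteq> 0"
proof -
  have "(1::nat) \<le> 2 ^ m" by simp
  moreover have "(2::nat) ^ Suc m = 2 * 2 ^ m" by simp
  ultimately show ?thesis by linarith
qed

lemma pos_snoc: "j \<le> length x \<Longrightarrow> \<tau> \<noteq> [] \<Longrightarrow> pos i j (\<tau> @ [a]) (x @ [a]) = pos i j \<tau> x"
  unfolding pos_def dflt_def by auto

lemma pos_full: "length x = n \<Longrightarrow> pos i n [] x = P i x"
  unfolding pos_def by simp

lemma pos_last: "length x = j \<Longrightarrow> pos i j [a] (x @ [a]) = P i x"
  unfolding pos_def by simp

lemma dw_last: "dw i u \<noteq> [] \<Longrightarrow> u \<noteq> [] \<and> last (dw i u) = last u"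
proof -
  assume ne: "dw i u \<noteq> []"
  have "u = tw i u @ dw i u" by simp
  then show ?thesis using ne by (metis append_is_Nil_conv last_appendR)
qed

lemma sep_aux:
  "length u = length w \<Longrightarrow> set u \<subseteq> {0..<k} \<Longrightarrow> set w \<subseteq> {0..<k} \<Longrightarrow>
   (\<forall>i. Suc i < k \<longrightarrow> pos i (length (tw i u)) (dw i u) w = P i (tw i u)) \<Longrightarrow> u = w"
proof (induction u arbitrary: w rule: rev_induct)
  case Nil then show ?case by simp
next
  case (snoc a u0)
  obtain w0 b where w: "w = w0 @ [b]" using snoc.prems(1) by (cases w rule: rev_exhaust) auto
  have lw: "length w0 = length u0" using snoc.prems(1) w by simp
  have ak: "a < k" and bk: "b < k" using snoc.prems(2,3) w by auto
  have H: "\<And>i. Suc i < k \<Longrightarrow> pos i (length (tw i (u0 @ [a]))) (dw i (u0 @ [a])) w = P i (tw i (u0 @ [a]))"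
    using snoc.prems(4) by blast
  show ?case
  proof (cases "b = a")
    case True
    have "u0 = w0"
    proof (rule snoc.IH)
      show "length u0 = length w0" using lw by simp
      show "set u0 \<subseteq> {0..<k}" using snoc.prems(2) by auto
      show "set w0 \<subseteq> {0..<k}" using snoc.prems(3) w by auto
      show "\<forall>i. Suc i < k \<longrightarrow> pos i (length (tw i u0)) (dw i u0) w0 = P i (tw i u0)"
      proof (intro allI impI)
        fix i assume ik: "Suc i < k"
        note Hi = H[OF ik]
        show "pos i (length (tw i u0)) (dw i u0) w0 = P i (tw i u0)"
        proof (cases "set u0 \<subseteq> {i, Suc i}")
          case True
          note su0 = True
          then have t0: "tw i u0 = u0" "dw i u0 = []"
            by (auto simp: takeWhile_eq_all_conv dropWhile_eq_Nil_conv subset_iff)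
          have "P i w0 = P i u0"
          proof (cases "a \<in> {i, Suc i}")
            case True
            note tt = tw_snoc_all[OF su0 True]
            have "P i (w0 @ [a]) = P i (u0 @ [a])" using Hi tt pos_full[of w "length (u0 @ [a])" i] w lw \<open>b = a\<close>
              by simp
            then show ?thesis using P_snoc_E[OF True] lw by simp
          next
            case False
            note tt = tw_snoc_last[OF su0 False]
            show ?thesis using Hi tt pos_last[of w0 "length u0" i a] w lw \<open>b = a\<close> by simp
          qed
          then show ?thesis unfolding t0 using pos_full[of w0 "length u0" i] lw by simp
        next
          case False
          note tt = tw_snoc_mid[OF False, of a]
          have "length (tw i u0) \<le> length w0" using lw by (metis length_takeWhile_le)
          then show ?thesis using Hi tt pos_snoc[of "length (tw i u0)" w0 "dw i u0" i a] w \<open>b = a\<close> by simp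
        qed
      qed
    qed
    then show ?thesis using w True by simp
  next
    case False
    note ba = False
    have False
    proof (cases "\<exists>i. Suc i < k \<and> set (u0 @ [a]) \<subseteq> {i, Suc i}")
      case True
      then obtain i where ik: "Suc i < k" and su: "set (u0 @ [a]) \<subseteq> {i, Suc i}" by blast
      have su0: "set u0 \<subseteq> {i, Suc i}" and aE: "a \<in> {i, Suc i}" using su by auto
      note tt = tw_snoc_all[OF su0 aE]
      have Pw: "P i w = P i (u0 @ [a])" using H[OF ik] tt pos_full[of w "length (u0 @ [a])" i] w lw by simp
      have b0: "P i w0 < 2 ^ length u0" "P i u0 < 2 ^ length u0" using P_bound[of i w0] P_bound[of i u0] lw by auto
      show False
      proof (cases "b \<in> {i, Suc i}")
        case True
        have "P i w0 + 2 ^ length u0 * (if b = Suc i then 1 else 0) = P i u0 + 2 ^ length u0 * (if a = Suc i then 1 else 0)"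
          using Pw P_snoc_E[OF True, of w0] P_snoc_E[OF aE, of u0] w lw by simp
        moreover have "(b = Suc i) \<noteq> (a = Suc i)" using True aE ba by auto
        ultimately show False using b0 by (auto split: if_splits)
      next
        case False
        have Pw2: "P i w = (if i < b then 2 ^ Suc (length u0) - 1 else 0)"
          using P_snoc_nonE[OF False, of w0] w lw by simp
        show False
        proof (cases "i < b")
          case True
          then have bi: "Suc i < b" using False by auto
          have "P i (u0 @ [a]) = 2 ^ length (u0 @ [a]) - 1" using Pw Pw2 True by simp
          then have "set (u0 @ [a]) \<subseteq> {Suc i}" using P_full_iff[OF su] by simp
          define i' where "i' = Suc i"
          have ik': "Suc i' < k" using bi bk unfolding i'_def by simp
          have su': "set (u0 @ [a]) \<subseteq> {i', Suc i'}" "set (u0 @ [a]) \<subseteq> {i'}"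
            using \<open>set (u0 @ [a]) \<subseteq> {Suc i}\<close> unfolding i'_def by auto
          have "P i' (u0 @ [a]) = 0" using P_zero_iff[OF su'(1)] su'(2) by simp
          then have Pw': "P i' w = 0" using H[OF ik'] tw_snoc_all[of u0 i' a] su' pos_full[of w "length (u0 @ [a])" i'] w lw
            by simp
          show False
          proof (cases "b \<in> {i', Suc i'}")
            case True
            then have "b = Suc i'" using bi unfolding i'_def by auto
            then show False using Pw' P_snoc_E[OF True, of w0] w by simp
          next
            case False
            then have "i' < b" using bi unfolding i'_def by auto
            then have "P i' w = 2 ^ Suc (length w0) - 1" using P_snoc_nonE[OF False, of w0] w by simp
            then show False using Pw' pow2_Suc_ne[of "length w0"] by simp
          qed
        next
          case False
          then have bi: "b < i" using \<open>b \<notin> {i, Suc i}\<close> by auto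
          have "P i (u0 @ [a]) = 0" using Pw Pw2 False by simp
          then have "set (u0 @ [a]) \<subseteq> {i}" using P_zero_iff[OF su] by simp
          define i' where "i' = i - 1"
          have ii: "i = Suc i'" using bi unfolding i'_def by simp
          have ik': "Suc i' < k" using ik ii by simp
          have su': "set (u0 @ [a]) \<subseteq> {i', Suc i'}" "set (u0 @ [a]) \<subseteq> {Suc i'}"
            using \<open>set (u0 @ [a]) \<subseteq> {i}\<close> ii by auto
          have "P i' (u0 @ [a]) = 2 ^ length (u0 @ [a]) - 1" using P_full_iff[OF su'(1)] su'(2) by simp
          then have Pw': "P i' w = 2 ^ Suc (length u0) - 1"
            using H[OF ik'] tw_snoc_all[of u0 i' a] su' pos_full[of w "length (u0 @ [a])" i'] w lw
            by simp
          show False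
          proof (cases "b \<in> {i', Suc i'}")
            case True
            then have "b = i'" using bi ii by auto
            then have "P i' w = P i' w0" using P_snoc_E[OF True, of w0] w by simp
            moreover have "P i' w0 < 2 ^ length u0" using P_bound[of i' w0] lw by simp
            moreover have "(2::nat) ^ length u0 \<le> 2 ^ Suc (length u0) - 1" by simp
            ultimately show False using Pw' by linarith
          next
            case False
            then have "\<not> i' < b" using bi ii by auto
            then have "P i' w = 0" using P_snoc_nonE[OF False, of w0] w by simp
            then show False using Pw' pow2_Suc_ne[of "length u0"] by simp
          qed
        qed
      qed
    next
      case False
      note nall = False
      let ?u = "u0 @ [a]"
      have Hd: "dflt i (length (tw i ?u)) (dw i ?u) = P i (tw i ?u)" if ik: "Suc i < k" for i
      proof -
        have "\<not> set ?u \<subseteq> {i, Suc i}" using nall ik by blast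
        then have ne: "dw i ?u \<noteq> []" by (auto simp: dropWhile_eq_Nil_conv subset_iff)
        then have la: "last (dw i ?u) = a" using dw_last[OF ne] by simp
        have lt: "length (tw i ?u) < length w"
        proof -
          have "length (tw i ?u) + length (dw i ?u) = length ?u"
            by (metis length_append takeWhile_dropWhile_id)
          moreover have "length (dw i ?u) \<ge> 1" using ne by (cases "dw i ?u") auto
          moreover have "length ?u = length w" using lw w by simp
          ultimately show ?thesis by linarith
        qed
        have "last (drop (length (tw i ?u)) w) = b" using lt w
          by (metis drop_eq_Nil last_drop last_snoc not_le)
        then have "drop (length (tw i ?u)) w \<noteq> dw i ?u" using la ba by auto
        then show ?thesis using H[OF ik] unfolding pos_def by simp
      qed
      define a1 where "a1 = hd ?u"
      have a1k: "a1 < k" using snoc.prems(2) unfolding a1_def by (simp add: hd_append subset_iff)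
      have k2: "2 \<le> k" using ak bk ba by linarith
      show False
      proof (cases "set ?u \<subseteq> {a1}")
        case True
        define i where "i = (if Suc a1 < k then a1 else a1 - 1)"
        have "Suc i < k \<and> set ?u \<subseteq> {i, Suc i}" using True a1k k2 unfolding i_def by auto
        then show False using nall by blast
      next
        case False
        define r1 where "r1 = takeWhile (\<lambda>y. y = a1) ?u"
        define r2 where "r2 = dropWhile (\<lambda>y. y = a1) ?u"
        have ur: "?u = r1 @ r2" unfolding r1_def r2_def by simp
        have sr1: "set r1 \<subseteq> {a1}" unfolding r1_def by (auto dest: set_takeWhileD)
        have r1ne: "r1 \<noteq> []" unfolding r1_def a1_def by (cases ?u) auto
        have "r2 \<noteq> []" using False sr1 ur by auto
        then obtain x rest where r2: "r2 = x # rest" by (cases r2) auto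
        have xa: "x \<noteq> a1" using r2 hd_dropWhile[of "\<lambda>y. y = a1" ?u] \<open>r2 \<noteq> []\<close> unfolding r2_def by auto
        have xk: "x < k" using snoc.prems(2) ur r2 by auto
        define i where "i = (if a1 < x then a1 else a1 - 1)"
        have ik: "Suc i < k" using xk xa a1k unfolding i_def by auto
        have a1E: "a1 \<in> {i, Suc i}" using xa unfolding i_def by auto
        have allr1: "\<And>y. y \<in> set r1 \<Longrightarrow> y \<in> {i, Suc i}" using sr1 a1E by auto
        have twu: "tw i ?u = r1 @ tw i r2" unfolding ur by (rule takeWhile_append2) (rule allr1)
        have dwu: "dw i ?u = dw i r2" unfolding ur by (rule dropWhile_append2) (rule allr1)
        note Hi = Hd[OF ik]
        show False
        proof (cases "x \<in> {i, Suc i}")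
          case True
          have st: "set (tw i ?u) \<subseteq> {i, Suc i}" by (rule tw_set)
          have a1in: "a1 \<in> set (tw i ?u)" using twu r1ne sr1 by (cases r1) auto
          have xin: "x \<in> set (tw i ?u)" using twu r2 True by simp
          have "\<not> set (tw i ?u) \<subseteq> {i}" "\<not> set (tw i ?u) \<subseteq> {Suc i}" using a1in xin xa by auto
          then have "P i (tw i ?u) \<noteq> 0" "P i (tw i ?u) \<noteq> 2 ^ length (tw i ?u) - 1"
            using P_zero_iff[OF st] P_full_iff[OF st] by auto
          then show False using Hi unfolding dflt_def by (auto split: if_splits)
        next
          case False
          have t2: "tw i r2 = []" "dw i r2 = r2" using r2 False by auto
          have sr1': "set r1 \<subseteq> {i, Suc i}" using sr1 a1E by auto
          have lr1: "length r1 \<ge> 1" using r1ne by (cases r1) auto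
          have pos1: "(2::nat) ^ length r1 - 1 \<noteq> 0"
          proof -
            have "(2::nat) ^ length r1 \<ge> 2" using lr1 by (metis power_one_right power_increasing_iff one_less_numeral_iff semiring_norm(76))
            then show ?thesis by simp
          qed
          show False
          proof (cases "a1 < x")
            case True
            then have "a1 = i" "Suc i < x" using False unfolding i_def by auto
            then have "P i r1 = 0" using P_zero_iff[OF sr1'] sr1 by simp
            moreover have "dflt i (length r1) r2 = 2 ^ length r1 - 1" using \<open>Suc i < x\<close> r2 unfolding dflt_def by simp
            ultimately show False using Hi twu dwu t2 pos1 by simp
          next
            case lx: False
            then have "a1 = Suc i" "x < i" using False xa unfolding i_def by auto
            then have "P i r1 = 2 ^ length r1 - 1" using P_full_iff[OF sr1'] sr1 by simp
            moreover have "dflt i (length r1) r2 = 0" using \<open>x < i\<close> r2 unfolding dflt_def by simp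
            ultimately show False using Hi twu dwu t2 pos1 by simp
          qed
        qed
      qed
    qed
    then show ?thesis ..
  qed
qed

lemma st_cases: "{s, t} = {i, Suc i} \<Longrightarrow> (s = Suc i \<and> t = i) \<or> (s = i \<and> t = Suc i)"
  by (auto simp: doubleton_eq_iff)

lemma P_move:
  assumes "{s, t} = {i, Suc i}" "set p \<subseteq> {i, Suc i}"
  shows "P i (edge_act (s, t) p) = nxt (2 ^ length p) (P i p) \<and> s = Suc i \<and> t = i
       \<or> P i (edge_act (s, t) p) = prv (2 ^ length p) (P i p) \<and> s = i \<and> t = Suc i"
  using st_cases[OF assms(1)] P_up[OF assms(2)] P_down[OF assms(2)] unfolding nxt_def prv_def by auto

lemma D_step:
  assumes u: "u \<in> words {0..<k} n" and ik: "Suc i < k" and st: "{s, t} = {i, Suc i}"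
  shows "D k n (edge_act (s, t) u) w \<le> D k n u w + 1"
proof -
  note S = D_split[OF u ik st]
  define p where "p = tw i u"
  define z where "z = pos i (length p) (dw i u) w"
  have zl: "z < 2 ^ length p" unfolding z_def by (rule pos_less)
  have xl: "P i p < 2 ^ length p" by (rule P_bound)
  have sp: "set p \<subseteq> {i, Suc i}" unfolding p_def by (rule tw_set)
  have "cdm (2 ^ length p) (P i (edge_act (s, t) p)) z \<le> cdm (2 ^ length p) (P i p) z + 1"
    using P_move[OF st sp] cdm_nxt1[OF xl zl] cdm_prv1[OF xl zl] by auto
  then show ?thesis using S(1,2) unfolding p_def z_def by simp
qed

lemma path_edge_E: "e \<in> path_edges k orient \<Longrightarrow> \<exists>i s t. e = (s, t) \<and> Suc i < k \<and> {s, t} = {i, Suc i}"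
  unfolding path_edges_def by (auto split: if_splits)

lemma R_cases:
  assumes "(x, y) \<in> schreier_adj {0..<k} (path_edges k orient) n"
  obtains i s t where "Suc i < k" "{s, t} = {i, Suc i}"
    "x \<in> words {0..<k} n" "y = edge_act (s, t) x"
  | i s t where "Suc i < k" "{s, t} = {i, Suc i}"
    "y \<in> words {0..<k} n" "x = edge_act (s, t) y"
  using assms unfolding schreier_adj_def
  by (auto dest!: path_edge_E)

lemma edge_words:
  "x \<in> words {0..<k} n \<Longrightarrow> Suc i < k \<Longrightarrow> {s, t} = {i, Suc i} \<Longrightarrow> edge_act (s, t) x \<in> words {0..<k} n"
proof -
  assume x: "x \<in> words {0..<k} n" and ik: "Suc i < k" and st: "{s, t} = {i, Suc i}"
  have "s \<in> {i, Suc i}" "t \<in> {i, Suc i}" using st by blast+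
  then have "s < k" "t < k" using ik by auto
  then show ?thesis using x set_edge_act[of s t x] unfolding words_def by auto
qed

lemma R_step:
  assumes "(x, y) \<in> schreier_adj {0..<k} (path_edges k orient) n"
  shows "x \<in> words {0..<k} n \<and> y \<in> words {0..<k} n \<and> D k n x w \<le> D k n y w + 1"
  using assms
proof (cases rule: R_cases)
  case (1 i s t)
  have yw: "y \<in> words {0..<k} n" using edge_words 1 by blast
  have st': "{t, s} = {i, Suc i}" using 1 by auto
  have "s \<noteq> t" using 1 by (auto simp: doubleton_eq_iff)
  then have "x = edge_act (t, s) y" using 1 edge_act_inv by simp
  then have "D k n x w \<le> D k n y w + 1" using D_step[OF yw 1(1) st'] by simp
  then show ?thesis using 1 yw by simp
next
  case (2 i s t)
  have xw: "x \<in> words {0..<k} n" using edge_words 2 by blast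
  then show ?thesis using D_step[OF 2(3,1,2)] 2 by simp
qed

lemma R_edge:
  assumes u: "u \<in> words {0..<k} n" and ik: "Suc i < k" and st: "{s, t} = {i, Suc i}"
  shows "(u, edge_act (s, t) u) \<in> schreier_adj {0..<k} (path_edges k orient) n"
proof -
  define e where "e = (if orient i then (i, i + 1) else (i + 1, i))"
  have eE: "e \<in> path_edges k orient" unfolding e_def path_edges_def using ik by auto
  show ?thesis
  proof (cases "e = (s, t)")
    case True
    then show ?thesis unfolding schreier_adj_def using u eE by blast
  next
    case False
    then have e: "e = (t, s)" using st unfolding e_def by (auto simp: doubleton_eq_iff split: if_splits)
    have "s \<noteq> t" using st by (auto simp: doubleton_eq_iff)
    then have "u = edge_act e (edge_act (s, t) u)" using e edge_act_inv by simp
    moreover have "edge_act (s, t) u \<in> words {0..<k} n" using edge_words u ik st by blast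
    ultimately show ?thesis unfolding schreier_adj_def using eE by blast
  qed
qed

lemma neighbor:
  assumes u: "u \<in> words {0..<k} n" and w: "w \<in> words {0..<k} n" and ne: "u \<noteq> w"
  shows "\<exists>v. (u, v) \<in> schreier_adj {0..<k} (path_edges k orient) n \<and> D k n v w + 1 = D k n u w"
proof -
  have "\<exists>i. Suc i < k \<and> pos i (length (tw i u)) (dw i u) w \<noteq> P i (tw i u)"
  proof (rule ccontr)
    assume "\<not> ?thesis"
    then have "u = w" using sep_aux[of u w k] u w unfolding words_def by auto
    then show False using ne by simp
  qed
  then obtain i where ik: "Suc i < k" and pne: "pos i (length (tw i u)) (dw i u) w \<noteq> P i (tw i u)" by blast
  define p where "p = tw i u"
  define z where "z = pos i (length p) (dw i u) w"
  have zl: "z < 2 ^ length p" unfolding z_def by (rule pos_less)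
  have xl: "P i p < 2 ^ length p" by (rule P_bound)
  have sp: "set p \<subseteq> {i, Suc i}" unfolding p_def by (rule tw_set)
  have xz: "P i p \<noteq> z" using pne unfolding z_def p_def by simp
  have st1: "{Suc i, i} = {i, Suc i}" by auto
  have st2: "{i, Suc i} = {i, Suc i}" by auto
  note S1 = D_split[OF u ik st1] and S2 = D_split[OF u ik st2]
  have up: "P i (edge_act (Suc i, i) p) = nxt (2 ^ length p) (P i p)"
    using P_up[OF sp] unfolding nxt_def by simp
  have dn: "P i (edge_act (i, Suc i) p) = prv (2 ^ length p) (P i p)"
    using P_down[OF sp] unfolding prv_def by simp
  from cdm_dec[OF xl zl xz] show ?thesis
  proof
    assume h: "cdm (2 ^ length p) (nxt (2 ^ length p) (P i p)) z + 1 = cdm (2 ^ length p) (P i p) z"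
    have "D k n (edge_act (Suc i, i) u) w + 1 = D k n u w"
      using S1(1,2) h up unfolding p_def z_def by simp
    then show ?thesis using R_edge[OF u ik st1] by blast
  next
    assume h: "cdm (2 ^ length p) (prv (2 ^ length p) (P i p)) z + 1 = cdm (2 ^ length p) (P i p) z"
    have "D k n (edge_act (i, Suc i) u) w + 1 = D k n u w"
      using S2(1,2) h dn unfolding p_def z_def by simp
    then show ?thesis using R_edge[OF u ik st2] by blast
  qed
qed

lemma dist_le:
  "(u, w) \<in> (schreier_adj {0..<k} (path_edges k orient) n) ^^ m \<Longrightarrow> D k n u w \<le> m"
proof (induction m arbitrary: u)
  case 0 then show ?case by (simp add: D_self)
next
  case (Suc m)
  then obtain v where uv: "(u, v) \<in> schreier_adj {0..<k} (path_edges k orient) n"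
    and vw: "(v, w) \<in> (schreier_adj {0..<k} (path_edges k orient) n) ^^ m"
    by (meson relpow_Suc_D2)
  have "D k n u w \<le> D k n v w + 1" using R_step[OF uv] by blast
  then show ?case using Suc.IH[OF vw] by simp
qed

lemma dist_reach:
  "u \<in> words {0..<k} n \<Longrightarrow> w \<in> words {0..<k} n \<Longrightarrow> D k n u w = d \<Longrightarrow>
   (u, w) \<in> (schreier_adj {0..<k} (path_edges k orient) n) ^^ d"
proof (induction d arbitrary: u)
  case 0
  have "u = w"
  proof (rule ccontr)
    assume "u \<noteq> w"
    then obtain v where "D k n v w + 1 = D k n u w" using neighbor[OF 0(1,2)] by blast
    then show False using 0(3) by simp
  qed
  then show ?case by simp
next
  case (Suc d)
  have "u \<noteq> w" using Suc.prems(3) D_self[of k n w] by auto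
  then obtain v where uv: "(u, v) \<in> schreier_adj {0..<k} (path_edges k orient) n"
    and dv: "D k n v w + 1 = D k n u w" using neighbor[OF Suc.prems(1,2)] by blast
  have vw: "v \<in> words {0..<k} n" using R_step[OF uv] by blast
  have "(v, w) \<in> (schreier_adj {0..<k} (path_edges k orient) n) ^^ d"
    using Suc.IH[OF vw Suc.prems(2)] dv Suc.prems(3) by simp
  then show ?case using uv by (meson relpow_Suc_I2)
qed

lemma graph_dist_D:
  "u \<in> words {0..<k} n \<Longrightarrow> w \<in> words {0..<k} n \<Longrightarrow>
   graph_dist (schreier_adj {0..<k} (path_edges k orient) n) u w = D k n u w"
  unfolding graph_dist_def
  by (rule Least_equality) (auto intro: dist_reach dist_le)

lemma words_0: "words V 0 = {[]}" unfolding words_def by auto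

lemma words_Suc_bij: "bij_betw (\<lambda>(q, a). q @ [a]) (words {0..<k} j \<times> {..<k}) (words {0..<k} (Suc j))"
proof (rule bij_betwI')
  show "\<And>x y. x \<in> words {0..<k} j \<times> {..<k} \<Longrightarrow> y \<in> words {0..<k} j \<times> {..<k} \<Longrightarrow>
      ((case x of (q, a) \<Rightarrow> q @ [a]) = (case y of (q, a) \<Rightarrow> q @ [a])) = (x = y)"
    by auto
  show "\<And>x. x \<in> words {0..<k} j \<times> {..<k} \<Longrightarrow> (case x of (q, a) \<Rightarrow> q @ [a]) \<in> words {0..<k} (Suc j)"
    unfolding words_def by auto
  show "\<exists>x\<in>words {0..<k} j \<times> {..<k}. y = (case x of (q, a) \<Rightarrow> q @ [a])" if y: "y \<in> words {0..<k} (Suc j)" for y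
  proof -
    obtain q a where "y = q @ [a]" using y unfolding words_def by (cases y rule: rev_exhaust) auto
    then show ?thesis using y unfolding words_def by auto
  qed
qed

lemma sum_words_Suc: "(\<Sum>x\<in>words {0..<k} (Suc j). f x) = (\<Sum>q\<in>words {0..<k} j. \<Sum>a<k. f (q @ [a]))"
proof -
  have "(\<Sum>x\<in>words {0..<k} (Suc j). f x) = (\<Sum>x\<in>words {0..<k} j \<times> {..<k}. f ((\<lambda>(q, a). q @ [a]) x))"
    using sum.reindex_bij_betw[OF words_Suc_bij, of f k j] by simp
  also have "\<dots> = (\<Sum>(q, a)\<in>words {0..<k} j \<times> {..<k}. f (q @ [a]))"
    by (rule sum.cong) auto
  also have "\<dots> = (\<Sum>q\<in>words {0..<k} j. \<Sum>a<k. f (q @ [a]))"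
    by (rule sum.cartesian_product[symmetric])
  finally show ?thesis .
qed

lemma split_sum: "Suc i < k \<Longrightarrow> (\<Sum>a<k. g a) = (\<Sum>a<i. g a) + g i + g (Suc i) + (\<Sum>a\<in>{Suc (Suc i)..<k}. g a)"
proof -
  assume ik: "Suc i < k"
  have "(\<Sum>a<k. g a) = (\<Sum>a\<in>{0..<k}. g a)" by (simp add: atLeast0LessThan)
  also have "\<dots> = (\<Sum>a\<in>{0..<i}. g a) + (\<Sum>a\<in>{i..<k}. g a)"
    using ik by (subst sum.atLeastLessThan_concat) auto
  also have "(\<Sum>a\<in>{i..<k}. g a) = g i + (\<Sum>a\<in>{Suc i..<k}. g a)"
    using ik by (subst sum.atLeast_Suc_lessThan) auto
  also have "(\<Sum>a\<in>{Suc i..<k}. g a) = g (Suc i) + (\<Sum>a\<in>{Suc (Suc i)..<k}. g a)"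
    using ik by (subst sum.atLeast_Suc_lessThan) auto
  finally show ?thesis by (simp add: atLeast0LessThan add.assoc)
qed

definition vl :: "nat \<Rightarrow> nat \<Rightarrow> nat \<Rightarrow> nat \<Rightarrow> nat" where
  "vl i M x a = (if a = i then x else if a = Suc i then x + M else if a < i then 0 else 2 * M - 1)"

lemma sum_vl: "Suc i < k \<Longrightarrow> (\<Sum>b<k. h (vl i M y b)) = i * h 0 + h y + h (y + M) + (k - 2 - i) * h (2 * M - 1)"
proof -
  assume ik: "Suc i < k"
  have "(\<Sum>b<i. h (vl i M y b)) = (\<Sum>b<i. h 0)" by (rule sum.cong) (auto simp: vl_def)
  moreover have "(\<Sum>b\<in>{Suc (Suc i)..<k}. h (vl i M y b)) = (\<Sum>b\<in>{Suc (Suc i)..<k}. h (2 * M - 1))"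
    by (rule sum.cong) (auto simp: vl_def)
  ultimately show ?thesis using split_sum[OF ik, of "\<lambda>b. h (vl i M y b)"] by (simp add: vl_def)
qed

lemma P_snoc_vl: "length q = j \<Longrightarrow> P i (q @ [a]) = vl i (2 ^ j) (P i q) a"
  unfolding vl_def using P_snoc_E[of a i q] P_snoc_nonE[of a i q] by auto

lemma cdmA: "x < M \<Longrightarrow> y < M \<Longrightarrow> cdm (2 * M) x y = dst x y"
  unfolding cdm_def dst_def by auto
lemma cdmB: "x < M \<Longrightarrow> y < M \<Longrightarrow> cdm (2 * M) (x + M) (y + M) = dst x y"
  unfolding cdm_def dst_def by auto
lemma cdmC: "x < M \<Longrightarrow> y < M \<Longrightarrow> cdm (2 * M) x (y + M) = M - dst x y"
  unfolding cdm_def dst_def min_def by auto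
lemma cdmC': "x < M \<Longrightarrow> y < M \<Longrightarrow> cdm (2 * M) (x + M) y = M - dst x y"
  unfolding cdm_def dst_def min_def by auto
lemma cdmD: "y < M \<Longrightarrow> cdm (2 * M) (2 * M - 1) y = y + 1"
  unfolding cdm_def dst_def min_def by auto
lemma cdmD': "y < M \<Longrightarrow> cdm (2 * M) y (2 * M - 1) = y + 1"
  unfolding cdm_def dst_def min_def by auto
lemma cdmE: "y < M \<Longrightarrow> cdm (2 * M) (2 * M - 1) (y + M) = M - 1 - y"
  unfolding cdm_def dst_def min_def by auto
lemma cdmE': "y < M \<Longrightarrow> cdm (2 * M) (y + M) (2 * M - 1) = M - 1 - y"
  unfolding cdm_def dst_def min_def by auto
lemma dst_le: "x < M \<Longrightarrow> y < M \<Longrightarrow> dst x y < M"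
  unfolding dst_def by auto

lemma inner_A:
  assumes ik: "Suc i < k" and x: "x < M" and y: "y < M"
  shows "(\<Sum>a<k. \<Sum>b<k. cdm (2 * M) (vl i M x a) (vl i M y b)) = 2 * M * (k - 1) + 2 * i * (k - 2 - i)"
proof -
  define \<beta> where "\<beta> = k - 2 - i"
  define h where "h u = i * cdm (2 * M) u 0 + cdm (2 * M) u y + cdm (2 * M) u (y + M) + \<beta> * cdm (2 * M) u (2 * M - 1)" for u
  have row: "(\<Sum>b<k. cdm (2 * M) u (vl i M y b)) = h u" for u
    unfolding h_def \<beta>_def by (rule sum_vl[OF ik])
  have "(\<Sum>a<k. \<Sum>b<k. cdm (2 * M) (vl i M x a) (vl i M y b)) = (\<Sum>a<k. h (vl i M x a))"
    using row by simp
  also have "\<dots> = i * h 0 + h x + h (x + M) + \<beta> * h (2 * M - 1)"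
    unfolding \<beta>_def by (rule sum_vl[OF ik])
  also have "\<dots> = 2 * M * (k - 1) + 2 * i * \<beta>"
  proof -
    have M0: "0 < M" using x by simp
    define d where "d = dst x y"
    have dM: "d < M" unfolding d_def using dst_le[OF x y] .
    have h0: "h 0 = M + \<beta>"
    proof -
      have "h 0 = y + (M - y) + \<beta>" unfolding h_def
        using cdmA[OF M0 y] cdmC[OF M0 y] cdmD'[of 0 M] M0 by (simp add: dst_def cdm_sym)
      then show ?thesis using y by simp
    qed
    have hx: "h x = i * x + M + \<beta> * (x + 1)"
    proof -
      have "h x = i * x + d + (M - d) + \<beta> * (x + 1)" unfolding h_def d_def
        using cdmA[OF x M0] cdmA[OF x y] cdmC[OF x y] cdmD'[OF x] by (simp add: dst_def)
      then show ?thesis using dM by simp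
    qed
    have hxM: "h (x + M) = i * (M - x) + M + \<beta> * (M - 1 - x)"
    proof -
      have "h (x + M) = i * (M - x) + (M - d) + d + \<beta> * (M - 1 - x)" unfolding h_def d_def
        using cdmC'[OF x M0] cdmC'[OF x y] cdmB[OF x y] cdmE'[OF x] by (simp add: dst_def)
      then show ?thesis using dM by simp
    qed
    have hH: "h (2 * M - 1) = i + M"
    proof -
      have "h (2 * M - 1) = i * 1 + (y + 1) + (M - 1 - y)" unfolding h_def
        using cdmD[OF M0] cdmD[OF y] cdmE[OF y] by simp
      then show ?thesis using y by simp
    qed
    have e1: "i * x + i * (M - x) = i * M" using x by (simp add: diff_mult_distrib2)
    have e2: "\<beta> * (x + 1) + \<beta> * (M - 1 - x) = \<beta> * M"
    proof -
      have "M - 1 - x = M - (x + 1)" by simp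
      moreover have "x + 1 \<le> M" using x by simp
      ultimately have "(x + 1) + (M - 1 - x) = M" by simp
      then show ?thesis by (metis distrib_left)
    qed
    have "i * h 0 + h x + h (x + M) + \<beta> * h (2 * M - 1)
        = i * M + i * \<beta> + (i * x + i * (M - x)) + 2 * M + (\<beta> * (x + 1) + \<beta> * (M - 1 - x)) + \<beta> * i + \<beta> * M"
      unfolding h0 hx hxM hH by (simp add: algebra_simps)
    also have "\<dots> = 2 * M * (i + \<beta> + 1) + 2 * i * \<beta>" unfolding e1 e2 by (simp add: algebra_simps)
    also have "i + \<beta> + 1 = k - 1" unfolding \<beta>_def using ik by simp
    finally show ?thesis .
  qed
  finally show ?thesis unfolding \<beta>_def .
qed

definition Asum :: "nat \<Rightarrow> nat \<Rightarrow> nat \<Rightarrow> nat" where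
  "Asum k i j = (\<Sum>q\<in>words {0..<k} j. \<Sum>q'\<in>words {0..<k} j. cdm (2 ^ j) (P i q) (P i q'))"

definition Sd :: "nat \<Rightarrow> nat \<Rightarrow> nat \<Rightarrow> nat \<Rightarrow> nat" where
  "Sd k i j d = (\<Sum>q\<in>words {0..<k} j. cdm (2 ^ j) (P i q) d)"

lemma Asum_0: "Asum k i 0 = 0"
  unfolding Asum_def words_0 by simp

lemma Sd_0: "Sd k i 0 0 = 0"
  unfolding Sd_def words_0 by simp

lemma words_len: "q \<in> words V j \<Longrightarrow> length q = j"
  unfolding words_def by simp

lemma Asum_Suc:
  assumes ik: "Suc i < k"
  shows "Asum k i (Suc j) = k ^ j * k ^ j * (2 * 2 ^ j * (k - 1) + 2 * i * (k - 2 - i))"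
proof -
  let ?W = "words {0..<k} j"
  let ?M = "(2::nat) ^ j"
  let ?C = "2 * ?M * (k - 1) + 2 * i * (k - 2 - i)"
  have "Asum k i (Suc j) = (\<Sum>q\<in>?W. \<Sum>a<k. \<Sum>q'\<in>?W. \<Sum>b<k. cdm (2 * ?M) (P i (q @ [a])) (P i (q' @ [b])))"
    unfolding Asum_def by (simp add: sum_words_Suc)
  also have "\<dots> = (\<Sum>q\<in>?W. \<Sum>a<k. \<Sum>q'\<in>?W. \<Sum>b<k. cdm (2 * ?M) (vl i ?M (P i q) a) (vl i ?M (P i q') b))"
    by (intro sum.cong refl) (simp add: P_snoc_vl words_len)
  also have "\<dots> = (\<Sum>q\<in>?W. \<Sum>q'\<in>?W. \<Sum>a<k. \<Sum>b<k. cdm (2 * ?M) (vl i ?M (P i q) a) (vl i ?M (P i q') b))"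
    by (intro sum.cong refl) (rule sum.swap)
  also have "\<dots> = (\<Sum>q\<in>?W. \<Sum>q'\<in>?W. ?C)"
  proof (intro sum.cong refl)
    fix q q' assume q: "q \<in> ?W" and q': "q' \<in> ?W"
    have "P i q < ?M" using P_bound[of i q] words_len[OF q] by simp
    moreover have "P i q' < ?M" using P_bound[of i q'] words_len[OF q'] by simp
    ultimately show "(\<Sum>a<k. \<Sum>b<k. cdm (2 * ?M) (vl i ?M (P i q) a) (vl i ?M (P i q') b)) = ?C"
      by (rule inner_A[OF ik])
  qed
  also have "\<dots> = k ^ j * k ^ j * ?C" by (simp add: card_words)
  finally show ?thesis .
qed

lemma Sd_Suc0:
  assumes ik: "Suc i < k"
  shows "Sd k i (Suc j) 0 = k ^ j * (2 ^ j + (k - 2 - i))"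
proof -
  let ?W = "words {0..<k} j"
  let ?M = "(2::nat) ^ j"
  have "Sd k i (Suc j) 0 = (\<Sum>q\<in>?W. \<Sum>a<k. cdm (2 * ?M) (vl i ?M (P i q) a) 0)"
    unfolding Sd_def by (simp add: sum_words_Suc P_snoc_vl words_len)
  also have "\<dots> = (\<Sum>q\<in>?W. ?M + (k - 2 - i))"
  proof (intro sum.cong refl)
    fix q assume "q \<in> ?W"
    define x where "x = P i q"
    have x: "x < ?M" unfolding x_def using P_bound[of i q] words_len[OF \<open>q \<in> ?W\<close>] by simp
    have M0: "0 < ?M" by simp
    have "(\<Sum>a<k. cdm (2 * ?M) (vl i ?M x a) 0) = i * 0 + x + (?M - x) + (k - 2 - i) * 1"
      using sum_vl[OF ik, of "\<lambda>u. cdm (2 * ?M) u 0" ?M x] cdmA[OF x M0] cdmC'[OF x M0] cdmD[OF M0]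
      by (simp add: dst_def)
    also have "\<dots> = ?M + (k - 2 - i)" using x by simp
    finally show "(\<Sum>a<k. cdm (2 * ?M) (vl i ?M (P i q) a) 0) = ?M + (k - 2 - i)" unfolding x_def .
  qed
  also have "\<dots> = k ^ j * (2 ^ j + (k - 2 - i))" by (simp add: card_words)
  finally show ?thesis .
qed

lemma Sd_Suc1:
  assumes ik: "Suc i < k"
  shows "Sd k i (Suc j) (2 ^ Suc j - 1) = k ^ j * (2 ^ j + i)"
proof -
  let ?W = "words {0..<k} j"
  let ?M = "(2::nat) ^ j"
  have "Sd k i (Suc j) (2 ^ Suc j - 1) = (\<Sum>q\<in>?W. \<Sum>a<k. cdm (2 * ?M) (vl i ?M (P i q) a) (2 * ?M - 1))"
    unfolding Sd_def by (simp add: sum_words_Suc P_snoc_vl words_len)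
  also have "\<dots> = (\<Sum>q\<in>?W. ?M + i)"
  proof (intro sum.cong refl)
    fix q assume "q \<in> ?W"
    define x where "x = P i q"
    have x: "x < ?M" unfolding x_def using P_bound[of i q] words_len[OF \<open>q \<in> ?W\<close>] by simp
    have M0: "0 < ?M" by simp
    have "(\<Sum>a<k. cdm (2 * ?M) (vl i ?M x a) (2 * ?M - 1)) = i * 1 + (x + 1) + (?M - 1 - x) + (k - 2 - i) * 0"
      using sum_vl[OF ik, of "\<lambda>u. cdm (2 * ?M) u (2 * ?M - 1)" ?M x] cdmD'[OF M0] cdmD'[OF x] cdmE'[OF x]
      by simp
    also have "\<dots> = ?M + i" using x by simp
    finally show "(\<Sum>a<k. cdm (2 * ?M) (vl i ?M (P i q) a) (2 * ?M - 1)) = ?M + i" unfolding x_def .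
  qed
  also have "\<dots> = k ^ j * (2 ^ j + i)" by (simp add: card_words)
  finally show ?thesis .
qed

lemma sum_pos:
  assumes t: "\<tau> \<in> words {0..<k} (n - j)" and jn: "j \<le> n"
  shows "(\<Sum>u\<in>words {0..<k} n. g (pos i j \<tau> u)) = (\<Sum>q\<in>words {0..<k} j. g (P i q)) + (k ^ n - k ^ j) * g (dflt i j \<tau>)"
proof -
  let ?W = "words {0..<k} n"
  define S1 where "S1 = (\<lambda>q. q @ \<tau>) ` words {0..<k} j"
  have lt: "length \<tau> = n - j" using t by (simp add: words_len)
  have S1W: "S1 \<subseteq> ?W" unfolding S1_def using t jn unfolding words_def by (auto simp: subset_iff)
  have inj: "inj_on (\<lambda>q. q @ \<tau>) (words {0..<k} j)" by (rule inj_onI) simp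
  have cS1: "card S1 = k ^ j" unfolding S1_def using card_image[OF inj] card_words by simp
  have S1c: "u \<in> S1 \<longleftrightarrow> u \<in> ?W \<and> drop j u = \<tau>" for u
  proof
    assume "u \<in> S1"
    then obtain q where "q \<in> words {0..<k} j" "u = q @ \<tau>" unfolding S1_def by auto
    then show "u \<in> ?W \<and> drop j u = \<tau>" using S1W \<open>u \<in> S1\<close> by (auto simp: words_len)
  next
    assume h: "u \<in> ?W \<and> drop j u = \<tau>"
    then have "take j u \<in> words {0..<k} j" unfolding words_def using jn
      by (auto dest: in_set_takeD)
    moreover have "u = take j u @ \<tau>" using h by (metis append_take_drop_id)
    ultimately show "u \<in> S1" unfolding S1_def by blast
  qed
  have fin: "finite ?W" by (rule finite_words)
  have "(\<Sum>u\<in>?W. g (pos i j \<tau> u)) = (\<Sum>u\<in>S1. g (pos i j \<tau> u)) + (\<Sum>u\<in>?W - S1. g (pos i j \<tau> u))"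
    using sum.subset_diff[OF S1W fin] by (simp add: add.commute)
  also have "(\<Sum>u\<in>S1. g (pos i j \<tau> u)) = (\<Sum>q\<in>words {0..<k} j. g (pos i j \<tau> (q @ \<tau>)))"
    unfolding S1_def by (rule sum.reindex[OF inj, unfolded comp_def])
  also have "\<dots> = (\<Sum>q\<in>words {0..<k} j. g (P i q))"
    by (rule sum.cong) (auto simp: pos_def words_len)
  also have "(\<Sum>u\<in>?W - S1. g (pos i j \<tau> u)) = (\<Sum>u\<in>?W - S1. g (dflt i j \<tau>))"
    by (rule sum.cong) (auto simp: pos_def S1c)
  also have "\<dots> = (k ^ n - k ^ j) * g (dflt i j \<tau>)"
    using card_Diff_subset[OF finite_subset[OF S1W fin] S1W] cS1 card_words[of k n] by simp
  finally show ?thesis .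
qed

lemma block_sum:
  assumes t: "\<tau> \<in> words {0..<k} (n - j)" and jn: "j \<le> n"
  shows "(\<Sum>u\<in>words {0..<k} n. \<Sum>w\<in>words {0..<k} n. cdm (2 ^ j) (pos i j \<tau> u) (pos i j \<tau> w))
     = Asum k i j + 2 * (k ^ n - k ^ j) * Sd k i j (dflt i j \<tau>)"
proof -
  let ?Q = "words {0..<k} j"
  let ?d = "dflt i j \<tau>"
  let ?N = "k ^ n - k ^ j"
  have "(\<Sum>u\<in>words {0..<k} n. \<Sum>w\<in>words {0..<k} n. cdm (2 ^ j) (pos i j \<tau> u) (pos i j \<tau> w))
      = (\<Sum>u\<in>words {0..<k} n. (\<lambda>x. (\<Sum>q\<in>?Q. cdm (2 ^ j) x (P i q)) + ?N * cdm (2 ^ j) x ?d) (pos i j \<tau> u))"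
    using sum_pos[OF t jn] by simp
  also have "\<dots> = (\<Sum>q'\<in>?Q. (\<Sum>q\<in>?Q. cdm (2 ^ j) (P i q') (P i q)) + ?N * cdm (2 ^ j) (P i q') ?d)
       + ?N * ((\<Sum>q\<in>?Q. cdm (2 ^ j) ?d (P i q)) + ?N * cdm (2 ^ j) ?d ?d)"
    by (rule sum_pos[OF t jn])
  also have "\<dots> = Asum k i j + ?N * Sd k i j ?d + ?N * Sd k i j ?d"
    unfolding Asum_def Sd_def by (simp add: sum.distrib sum_distrib_left cdm_sym[of "2 ^ j" ?d])
  finally show ?thesis by simp
qed

lemma total_sum:
  "(\<Sum>u\<in>words {0..<k} n. \<Sum>w\<in>words {0..<k} n. D k n u w)
   = (\<Sum>(i, j, \<tau>)\<in>blocks k n. Asum k i j + 2 * (k ^ n - k ^ j) * Sd k i j (dflt i j \<tau>))"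
proof -
  have "(\<Sum>u\<in>words {0..<k} n. \<Sum>w\<in>words {0..<k} n. D k n u w)
      = (\<Sum>u\<in>words {0..<k} n. \<Sum>w\<in>words {0..<k} n. \<Sum>B\<in>blocks k n.
           (\<lambda>(i, j, \<tau>). cdm (2 ^ j) (pos i j \<tau> u) (pos i j \<tau> w)) B)"
    unfolding D_def by simp
  also have "\<dots> = (\<Sum>u\<in>words {0..<k} n. \<Sum>B\<in>blocks k n. \<Sum>w\<in>words {0..<k} n.
           (\<lambda>(i, j, \<tau>). cdm (2 ^ j) (pos i j \<tau> u) (pos i j \<tau> w)) B)"
    by (rule sum.cong[OF refl]) (rule sum.swap)
  also have "\<dots> = (\<Sum>B\<in>blocks k n. \<Sum>u\<in>words {0..<k} n. \<Sum>w\<in>words {0..<k} n.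
           (\<lambda>(i, j, \<tau>). cdm (2 ^ j) (pos i j \<tau> u) (pos i j \<tau> w)) B)"
    by (rule sum.swap)
  also have "\<dots> = (\<Sum>(i, j, \<tau>)\<in>blocks k n. Asum k i j + 2 * (k ^ n - k ^ j) * Sd k i j (dflt i j \<tau>))"
  proof (rule sum.cong[OF refl])
    fix B assume "B \<in> blocks k n"
    then obtain i j \<tau> where B: "B = (i, j, \<tau>)" "\<tau> \<in> words {0..<k} (n - j)" "j \<le> n"
      unfolding blocks_def by auto
    show "(\<Sum>u\<in>words {0..<k} n. \<Sum>w\<in>words {0..<k} n. (\<lambda>(i, j, \<tau>). cdm (2 ^ j) (pos i j \<tau> u) (pos i j \<tau> w)) B)
        = (\<lambda>(i, j, \<tau>). Asum k i j + 2 * (k ^ n - k ^ j) * Sd k i j (dflt i j \<tau>)) B"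
      using block_sum[OF B(2,3)] B(1) by simp
  qed
  finally show ?thesis .
qed

definition T :: "nat \<Rightarrow> nat \<Rightarrow> nat \<Rightarrow> nat \<Rightarrow> nat list set" where
  "T k n i j = {\<tau> \<in> words {0..<k} (n - j). \<tau> = [] \<or> hd \<tau> \<notin> {i, Suc i}}"

lemma blocks_Sigma: "blocks k n = Sigma {..<k - 1} (\<lambda>i. Sigma {..n} (\<lambda>j. T k n i j))"
  unfolding blocks_def T_def by auto

lemma finite_T: "finite (T k n i j)"
  unfolding T_def using finite_words by auto

lemma sum_blocks: "(\<Sum>(i, j, \<tau>)\<in>blocks k n. F i j \<tau>) = (\<Sum>i<k - 1. \<Sum>j\<le>n. \<Sum>\<tau>\<in>T k n i j. F i j \<tau>)"
proof -
  have "(\<Sum>i<k - 1. \<Sum>j\<le>n. \<Sum>\<tau>\<in>T k n i j. F i j \<tau>) = (\<Sum>i<k - 1. \<Sum>(j, \<tau>)\<in>Sigma {..n} (T k n i). F i j \<tau>)"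
    by (rule sum.cong[OF refl]) (rule sum.Sigma, auto simp: finite_T)
  also have "\<dots> = (\<Sum>(i, j, \<tau>)\<in>Sigma {..<k - 1} (\<lambda>i. Sigma {..n} (T k n i)). F i j \<tau>)"
    by (subst sum.Sigma) (auto simp: finite_T)
  finally show ?thesis unfolding blocks_Sigma by simp
qed

lemma T_n: "T k n i n = {[]}"
  unfolding T_def words_def by auto

lemma card_hd:
  assumes S: "S \<subseteq> {0..<k}"
  shows "card {\<tau> \<in> words {0..<k} (Suc m). hd \<tau> \<in> S} = card S * k ^ m"
proof -
  have eq: "{\<tau> \<in> words {0..<k} (Suc m). hd \<tau> \<in> S} = (\<lambda>(a, r). a # r) ` (S \<times> words {0..<k} m)"
  proof
    show "{\<tau> \<in> words {0..<k} (Suc m). hd \<tau> \<in> S} \<subseteq> (\<lambda>(a, r). a # r) ` (S \<times> words {0..<k} m)"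
    proof
      fix \<tau> assume h: "\<tau> \<in> {\<tau> \<in> words {0..<k} (Suc m). hd \<tau> \<in> S}"
      then obtain a r where "\<tau> = a # r" unfolding words_def by (cases \<tau>) auto
      then show "\<tau> \<in> (\<lambda>(a, r). a # r) ` (S \<times> words {0..<k} m)" using h unfolding words_def by force
    qed
    show "(\<lambda>(a, r). a # r) ` (S \<times> words {0..<k} m) \<subseteq> {\<tau> \<in> words {0..<k} (Suc m). hd \<tau> \<in> S}"
      using S unfolding words_def by (auto simp: subset_iff)
  qed
  have inj: "inj_on (\<lambda>(a, r). a # r) (S \<times> words {0..<k} m)" by (rule inj_onI) auto
  have fS: "finite S" using S finite_subset by blast
  show ?thesis unfolding eq card_image[OF inj] card_cartesian_product card_words ..
qed

lemma sum_T_lt: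
  assumes jn: "j < n" and ik: "Suc i < k"
  shows "(\<Sum>\<tau>\<in>T k n i j. F (dflt i j \<tau>)) = i * k ^ (n - j - 1) * F 0 + (k - 2 - i) * k ^ (n - j - 1) * F (2 ^ j - 1)"
proof -
  define m where "m = n - j - 1"
  have nj: "n - j = Suc m" unfolding m_def using jn by simp
  define Tlo where "Tlo = {\<tau> \<in> words {0..<k} (Suc m). hd \<tau> \<in> {0..<i}}"
  define Thi where "Thi = {\<tau> \<in> words {0..<k} (Suc m). hd \<tau> \<in> {Suc (Suc i)..<k}}"
  have TT: "T k n i j = Tlo \<union> Thi"
  proof -
    have "\<tau> \<in> T k n i j \<longleftrightarrow> \<tau> \<in> Tlo \<union> Thi" for \<tau>
    proof
      assume h: "\<tau> \<in> T k n i j"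
      then have w: "\<tau> \<in> words {0..<k} (Suc m)" and c: "\<tau> = [] \<or> hd \<tau> \<notin> {i, Suc i}" unfolding T_def nj by auto
      then have ne: "\<tau> \<noteq> []" unfolding words_def by auto
      then have "hd \<tau> < k" using w unfolding words_def by (cases \<tau>) auto
      then show "\<tau> \<in> Tlo \<union> Thi" using c ne w unfolding Tlo_def Thi_def by auto
    next
      assume "\<tau> \<in> Tlo \<union> Thi"
      then show "\<tau> \<in> T k n i j" unfolding T_def Tlo_def Thi_def nj by auto
    qed
    then show ?thesis by blast
  qed
  have disj: "Tlo \<inter> Thi = {}" unfolding Tlo_def Thi_def by auto
  have fin: "finite Tlo" "finite Thi" unfolding Tlo_def Thi_def using finite_words by auto
  have "(\<Sum>\<tau>\<in>T k n i j. F (dflt i j \<tau>)) = (\<Sum>\<tau>\<in>Tlo. F (dflt i j \<tau>)) + (\<Sum>\<tau>\<in>Thi. F (dflt i j \<tau>))"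
    unfolding TT by (rule sum.union_disjoint[OF fin disj])
  also have "(\<Sum>\<tau>\<in>Tlo. F (dflt i j \<tau>)) = (\<Sum>\<tau>\<in>Tlo. F 0)"
    by (rule sum.cong) (auto simp: Tlo_def dflt_def)
  also have "(\<Sum>\<tau>\<in>Thi. F (dflt i j \<tau>)) = (\<Sum>\<tau>\<in>Thi. F (2 ^ j - 1))"
    by (rule sum.cong) (auto simp: Thi_def dflt_def)
  finally have e: "(\<Sum>\<tau>\<in>T k n i j. F (dflt i j \<tau>)) = card Tlo * F 0 + card Thi * F (2 ^ j - 1)" by simp
  have "card Tlo = i * k ^ m" unfolding Tlo_def using card_hd[of "{0..<i}" k m] ik by simp
  moreover have "card Thi = (k - 2 - i) * k ^ m" unfolding Thi_def using card_hd[of "{Suc (Suc i)..<k}" k m] by simp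
  ultimately show ?thesis using e unfolding m_def by simp
qed

lemma inner_i:
  assumes ik: "Suc i < k" and n: "n = Suc m"
  shows "(\<Sum>j\<le>n. \<Sum>\<tau>\<in>T k n i j. Asum k i j + 2 * (k ^ n - k ^ j) * Sd k i j (dflt i j \<tau>)) =
    Asum k i n + (\<Sum>l<m. i * k ^ (n - Suc l - 1) * (Asum k i (Suc l) + 2 * (k ^ n - k ^ Suc l) * Sd k i (Suc l) 0)
        + (k - 2 - i) * k ^ (n - Suc l - 1) * (Asum k i (Suc l) + 2 * (k ^ n - k ^ Suc l) * Sd k i (Suc l) (2 ^ Suc l - 1)))"
proof -
  define f where "f j = (\<Sum>\<tau>\<in>T k n i j. Asum k i j + 2 * (k ^ n - k ^ j) * Sd k i j (dflt i j \<tau>))" for j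
  have "(\<Sum>j\<le>n. f j) = (\<Sum>j<n. f j) + f n"
    by (simp add: lessThan_Suc_atMost[symmetric])
  also have "f n = Asum k i n" unfolding f_def T_n by simp
  also have "(\<Sum>j<n. f j) = f 0 + (\<Sum>l<m. f (Suc l))" unfolding n by (rule sum.lessThan_Suc_shift)
  also have "f 0 = 0"
    unfolding f_def using sum_T_lt[of 0 n i k "\<lambda>x. Asum k i 0 + 2 * (k ^ n - k ^ 0) * Sd k i 0 x"] ik n
    by (simp add: Asum_0 Sd_0)
  also have "(\<Sum>l<m. f (Suc l)) = (\<Sum>l<m. i * k ^ (n - Suc l - 1) * (Asum k i (Suc l) + 2 * (k ^ n - k ^ Suc l) * Sd k i (Suc l) 0)
        + (k - 2 - i) * k ^ (n - Suc l - 1) * (Asum k i (Suc l) + 2 * (k ^ n - k ^ Suc l) * Sd k i (Suc l) (2 ^ Suc l - 1)))"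
  proof (rule sum.cong[OF refl])
    fix l assume "l \<in> {..<m}"
    then have "Suc l < n" using n by simp
    then show "f (Suc l) = i * k ^ (n - Suc l - 1) * (Asum k i (Suc l) + 2 * (k ^ n - k ^ Suc l) * Sd k i (Suc l) 0)
        + (k - 2 - i) * k ^ (n - Suc l - 1) * (Asum k i (Suc l) + 2 * (k ^ n - k ^ Suc l) * Sd k i (Suc l) (2 ^ Suc l - 1))"
      unfolding f_def by (rule sum_T_lt[OF _ ik])
  qed
  finally show ?thesis unfolding f_def by simp
qed

lemma term_alg:
  fixes a b E Q W K D :: real
  assumes "a + b = K - 2"
  shows "a * E * (Q * Q * (2 * W * (K - 1) + 2 * (a * b)) + 2 * D * (Q * (W + b)))
        + b * E * (Q * Q * (2 * W * (K - 1) + 2 * (a * b)) + 2 * D * (Q * (W + a)))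
      = E * Q * (Q * (K - 2) * (2 * W * (K - 1) + 2 * (a * b)) + 2 * D * (W * (K - 2) + 2 * (a * b)))"
proof -
  have b: "b = K - 2 - a" using assms by simp
  show ?thesis unfolding b by (simp add: algebra_simps)
qed

lemma term_real:
  assumes ik: "Suc i < k" and lm: "l < m" and n: "n = Suc m"
  shows "real (i * k ^ (n - Suc l - 1) * (Asum k i (Suc l) + 2 * (k ^ n - k ^ Suc l) * Sd k i (Suc l) 0)
        + (k - 2 - i) * k ^ (n - Suc l - 1) * (Asum k i (Suc l) + 2 * (k ^ n - k ^ Suc l) * Sd k i (Suc l) (2 ^ Suc l - 1)))
    = real k ^ m / real k * (real k ^ l * (real k - 2) * (2 * 2 ^ l * (real k - 1) + 2 * (real i * real (k - 2 - i)))
        + 2 * (real k * real k ^ m - real k * real k ^ l) * (2 ^ l * (real k - 2) + 2 * (real i * real (k - 2 - i))))"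
proof -
  define K where "K = real k"
  define a where "a = real i"
  define b where "b = real (k - 2 - i)"
  define E where "E = K ^ (m - l - 1)"
  define Q where "Q = K ^ l"
  define W where "W = (2::real) ^ l"
  have K1: "K \<ge> 1" unfolding K_def using ik by simp
  have ab: "a + b = K - 2" unfolding a_def b_def K_def using ik by (simp add: of_nat_diff)
  have EQK: "E * Q * K = K ^ m"
  proof -
    have "m - l - 1 + l + 1 = m" using lm by simp
    then show ?thesis unfolding E_def Q_def by (metis power_add power_one_right)
  qed
  have ex: "n - Suc l - 1 = m - l - 1" using n by simp
  have D: "real (k ^ n - k ^ Suc l) = K * K ^ m - K * Q"
  proof -
    have "k ^ Suc l \<le> k ^ n" using ik lm n by (intro power_increasing) auto
    then show ?thesis unfolding K_def Q_def n by (simp add: of_nat_diff)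
  qed
  have A: "real (Asum k i (Suc l)) = Q * Q * (2 * W * (K - 1) + 2 * (a * b))"
    unfolding Asum_Suc[OF ik] K_def Q_def W_def a_def b_def using ik by (simp add: of_nat_diff)
  have S0: "real (Sd k i (Suc l) 0) = Q * (W + b)"
    unfolding Sd_Suc0[OF ik] K_def Q_def W_def b_def by simp
  have S1: "real (Sd k i (Suc l) (2 ^ Suc l - 1)) = Q * (W + a)"
    unfolding Sd_Suc1[OF ik] K_def Q_def W_def a_def by simp
  have L: "real (i * k ^ (n - Suc l - 1) * (Asum k i (Suc l) + 2 * (k ^ n - k ^ Suc l) * Sd k i (Suc l) 0)
        + (k - 2 - i) * k ^ (n - Suc l - 1) * (Asum k i (Suc l) + 2 * (k ^ n - k ^ Suc l) * Sd k i (Suc l) (2 ^ Suc l - 1)))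
      = a * E * (Q * Q * (2 * W * (K - 1) + 2 * (a * b)) + 2 * (K * K ^ m - K * Q) * (Q * (W + b)))
        + b * E * (Q * Q * (2 * W * (K - 1) + 2 * (a * b)) + 2 * (K * K ^ m - K * Q) * (Q * (W + a)))"
    unfolding of_nat_add of_nat_mult A D S0 S1 ex
    by (simp add: a_def b_def E_def K_def)
  have R: "K ^ m / K * (Q * (K - 2) * (2 * W * (K - 1) + 2 * (a * b)) + 2 * (K * K ^ m - K * Q) * (W * (K - 2) + 2 * (a * b)))
      = E * Q * (Q * (K - 2) * (2 * W * (K - 1) + 2 * (a * b)) + 2 * (K * K ^ m - K * Q) * (W * (K - 2) + 2 * (a * b)))"
    using EQK K1 by (simp add: EQK[symmetric])
  have "a * E * (Q * Q * (2 * W * (K - 1) + 2 * (a * b)) + 2 * (K * K ^ m - K * Q) * (Q * (W + b)))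
        + b * E * (Q * Q * (2 * W * (K - 1) + 2 * (a * b)) + 2 * (K * K ^ m - K * Q) * (Q * (W + a)))
      = E * Q * (Q * (K - 2) * (2 * W * (K - 1) + 2 * (a * b)) + 2 * (K * K ^ m - K * Q) * (W * (K - 2) + 2 * (a * b)))"
    by (rule term_alg[OF ab])
  then show ?thesis using L R unfolding K_def Q_def W_def a_def b_def by simp
qed

lemma gsum:
  fixes K Y c :: real
  shows "(\<Sum>l<m. K ^ l * (K - 2) * (2 * 2 ^ l * (K - 1) + 2 * c) + 2 * (K * Y - K * K ^ l) * (2 ^ l * (K - 2) + 2 * c))
   = 2 * (K - 2) * (K - 1) * (\<Sum>l<m. (2 * K) ^ l) + 2 * c * (K - 2) * (\<Sum>l<m. K ^ l) + 2 * K * Y * (K - 2) * (\<Sum>l<m. 2 ^ l)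
     + 4 * c * K * Y * real m - 2 * K * (K - 2) * (\<Sum>l<m. (2 * K) ^ l) - 4 * c * K * (\<Sum>l<m. K ^ l)"
  by (induction m) (simp_all add: algebra_simps power_mult_distrib)

lemma geom: "((x::real) - 1) * (\<Sum>l<m. x ^ l) = x ^ m - 1"
  by (induction m) (simp_all add: algebra_simps)

lemma sum_nat_real: "(\<Sum>i<N. real i) = real N * (real N - 1) / 2"
  by (induction N) (simp_all add: algebra_simps add_divide_distrib)

lemma sum_ab: "(\<Sum>i<N. real i * (real N - 1 - real i)) = real N * (real N - 1) * (real N - 2) / 6"
proof (induction N)
  case 0 then show ?case by simp
next
  case (Suc N)
  have "(\<Sum>i<Suc N. real i * (real (Suc N) - 1 - real i)) = (\<Sum>i<N. real i * (real N - 1 - real i) + real i) + real N * 0"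
    by (simp add: algebra_simps)
  also have "\<dots> = real N * (real N - 1) * (real N - 2) / 6 + real N * (real N - 1) / 2"
    by (simp add: sum.distrib Suc.IH sum_nat_real)
  also have "\<dots> = real (Suc N) * (real (Suc N) - 1) * (real (Suc N) - 2) / 6"
    by (simp add: field_simps)
  finally show ?case .
qed

lemma dist4: "(Z::real) * (a + b - c + d) = Z * a + Z * b - Z * c + Z * d"
  by (simp add: algebra_simps)

lemma final_combine:
  fixes K X Y m G2K GK G2 :: real
  assumes K: "K \<ge> 2" and h1: "G2K * (2 * K - 1) = X * Y - 1" and h2: "GK * (K - 1) = Y - 1" and h3: "G2 = X - 1"
  defines "H0 \<equiv> 2 * (K - 2) * (K - 1) * G2K + 2 * K * Y * (K - 2) * G2 - 2 * K * (K - 2) * G2K"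
  defines "H1 \<equiv> 2 * (K - 2) * GK + 4 * K * Y * m - 4 * K * GK"
  defines "S \<equiv> (K - 1) * (K - 2) * (K - 3) / 6"
  shows "((K - 1) * (Y * Y * (2 * X * (K - 1)) + Y / K * H0) + S * (2 * Y * Y + Y / K * H1)) / 2 =
      (K - 1)^2 * (2 * K^2 - 2 * K - 1) / (K^3 * (2 * K - 1)) * (2 * X) * (K^2 * Y^2)
    + (K - 1) * (K - 2) * (K - 3) / (3 * K^2) * (m + 1) * (K^2 * Y^2)
    - (K + 1) * (K - 2) * (K^2 + 2 * K - 6) / (6 * K^3) * (K^2 * Y^2)
    + (K + 1) * (K - 2) * (2 * K - 5) / (6 * K * (2 * K - 1)) * (K * Y)"
proof -
  have k0: "K \<noteq> 0" "2 * K - 1 \<noteq> 0" using K by auto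
  define Z where "Z = 12 * K^3 * (2 * K - 1)"
  have Z0: "Z \<noteq> 0" unfolding Z_def using k0 by simp
  have e1: "Z * (((K - 1) * (Y * Y * (2 * X * (K - 1)) + Y / K * H0) + S * (2 * Y * Y + Y / K * H1)) / 2) =
     K^2 * (2 * K - 1) * (6 * (K - 1) * (2 * (K - 1) * X * Y^2 * K + 2 * (K - 2) * (K - 1) * Y * G2K + 2 * (K - 2) * Y * (Y * (X - 1) - G2K) * K)
         + (K - 1) * (K - 2) * (K - 3) * (2 * Y^2 * K + 2 * (K - 2) * Y * GK + 4 * Y * (Y * m - GK) * K))"
    unfolding Z_def H0_def H1_def S_def h3 using k0 by (simp add: field_simps power2_eq_square power3_eq_cube)
  define A1 where "A1 = (K - 1)^2 * (2 * K^2 - 2 * K - 1)"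
  define A2 where "A2 = (K - 1) * (K - 2) * (K - 3)"
  define A3 where "A3 = (K + 1) * (K - 2) * (K^2 + 2 * K - 6)"
  define A4 where "A4 = (K + 1) * (K - 2) * (2 * K - 5)"
  have t1: "Z * (A1 / (K^3 * (2 * K - 1)) * (2 * X) * (K^2 * Y^2)) = 24 * A1 * X * K^2 * Y^2"
    unfolding Z_def using k0 by (simp add: field_simps)
  have t2: "Z * (A2 / (3 * K^2) * (m + 1) * (K^2 * Y^2)) = 4 * A2 * (m + 1) * K^3 * (2 * K - 1) * Y^2"
    unfolding Z_def using k0 by (simp add: field_simps power2_eq_square power3_eq_cube)
  have t3: "Z * (A3 / (6 * K^3) * (K^2 * Y^2)) = 2 * A3 * K^2 * (2 * K - 1) * Y^2"
    unfolding Z_def using k0 by (simp add: field_simps)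
  have t4: "Z * (A4 / (6 * K * (2 * K - 1)) * (K * Y)) = 2 * A4 * K^3 * Y"
    unfolding Z_def using k0 by (simp add: field_simps power2_eq_square power3_eq_cube)
  have e2: "Z * (A1 / (K^3 * (2 * K - 1)) * (2 * X) * (K^2 * Y^2)
    + A2 / (3 * K^2) * (m + 1) * (K^2 * Y^2)
    - A3 / (6 * K^3) * (K^2 * Y^2)
    + A4 / (6 * K * (2 * K - 1)) * (K * Y)) =
    24 * A1 * X * K^2 * Y^2 + 4 * A2 * (m + 1) * K^3 * (2 * K - 1) * Y^2
        - 2 * A3 * K^2 * (2 * K - 1) * Y^2 + 2 * A4 * K^3 * Y"
    by (subst dist4) (simp only: t1 t2 t3 t4)
  have "Z * (((K - 1) * (Y * Y * (2 * X * (K - 1)) + Y / K * H0) + S * (2 * Y * Y + Y / K * H1)) / 2)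
     = Z * (A1 / (K^3 * (2 * K - 1)) * (2 * X) * (K^2 * Y^2)
    + A2 / (3 * K^2) * (m + 1) * (K^2 * Y^2)
    - A3 / (6 * K^3) * (K^2 * Y^2)
    + A4 / (6 * K * (2 * K - 1)) * (K * Y))"
    unfolding e1 e2 unfolding A1_def A2_def A3_def A4_def using h1 h2 by algebra
  then show ?thesis using Z0 unfolding A1_def A2_def A3_def A4_def by simp
qed

lemma inner_real:
  assumes ik: "Suc i < k" and n: "n = Suc m"
  shows "real (\<Sum>j\<le>n. \<Sum>\<tau>\<in>T k n i j. Asum k i j + 2 * (k ^ n - k ^ j) * Sd k i j (dflt i j \<tau>))
    = real k ^ m * real k ^ m * (2 * 2 ^ m * (real k - 1))
      + real k ^ m / real k * (2 * (real k - 2) * (real k - 1) * (\<Sum>l<m. (2 * real k) ^ l)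
          + 2 * real k * real k ^ m * (real k - 2) * (\<Sum>l<m. 2 ^ l) - 2 * real k * (real k - 2) * (\<Sum>l<m. (2 * real k) ^ l))
      + (real i * real (k - 2 - i)) * (2 * real k ^ m * real k ^ m
          + real k ^ m / real k * (2 * (real k - 2) * (\<Sum>l<m. real k ^ l) + 4 * real k * real k ^ m * real m - 4 * real k * (\<Sum>l<m. real k ^ l)))"
proof -
  define K where "K = real k"
  define c where "c = real i * real (k - 2 - i)"
  have A: "real (Asum k i n) = K ^ m * K ^ m * (2 * 2 ^ m * (K - 1) + 2 * c)"
    unfolding n Asum_Suc[OF ik] K_def c_def using ik by (simp add: of_nat_diff)
  have "real (\<Sum>j\<le>n. \<Sum>\<tau>\<in>T k n i j. Asum k i j + 2 * (k ^ n - k ^ j) * Sd k i j (dflt i j \<tau>))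
      = real (Asum k i n) + (\<Sum>l<m. K ^ m / K * (K ^ l * (K - 2) * (2 * 2 ^ l * (K - 1) + 2 * c)
        + 2 * (K * K ^ m - K * K ^ l) * (2 ^ l * (K - 2) + 2 * c)))"
    unfolding inner_i[OF ik n] of_nat_add of_nat_sum
    using term_real[OF ik _ n] unfolding K_def c_def by simp
  also have "\<dots> = K ^ m * K ^ m * (2 * 2 ^ m * (K - 1) + 2 * c) + K ^ m / K * (2 * (K - 2) * (K - 1) * (\<Sum>l<m. (2 * K) ^ l) + 2 * c * (K - 2) * (\<Sum>l<m. K ^ l) + 2 * K * K ^ m * (K - 2) * (\<Sum>l<m. 2 ^ l)
     + 4 * c * K * K ^ m * real m - 2 * K * (K - 2) * (\<Sum>l<m. (2 * K) ^ l) - 4 * c * K * (\<Sum>l<m. K ^ l))"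
    unfolding A sum_distrib_left[symmetric] gsum ..
  also have "\<dots> = K ^ m * K ^ m * (2 * 2 ^ m * (K - 1))
      + K ^ m / K * (2 * (K - 2) * (K - 1) * (\<Sum>l<m. (2 * K) ^ l)
          + 2 * K * K ^ m * (K - 2) * (\<Sum>l<m. 2 ^ l) - 2 * K * (K - 2) * (\<Sum>l<m. (2 * K) ^ l))
      + c * (2 * K ^ m * K ^ m
          + K ^ m / K * (2 * (K - 2) * (\<Sum>l<m. K ^ l) + 4 * K * K ^ m * real m - 4 * K * (\<Sum>l<m. K ^ l)))"
    by (simp add: algebra_simps)
  finally show ?thesis unfolding K_def c_def .
qed


lemma total_real:
  assumes k2: "k \<ge> 2" and n: "n = Suc m"
  shows "real (\<Sum>u\<in>words {0..<k} n. \<Sum>w\<in>words {0..<k} n. D k n u w)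
    = (real k - 1) * (real k ^ m * real k ^ m * (2 * 2 ^ m * (real k - 1))
      + real k ^ m / real k * (2 * (real k - 2) * (real k - 1) * (\<Sum>l<m. (2 * real k) ^ l)
          + 2 * real k * real k ^ m * (real k - 2) * (\<Sum>l<m. 2 ^ l) - 2 * real k * (real k - 2) * (\<Sum>l<m. (2 * real k) ^ l)))
      + ((real k - 1) * (real k - 2) * (real k - 3) / 6) * (2 * real k ^ m * real k ^ m
          + real k ^ m / real k * (2 * (real k - 2) * (\<Sum>l<m. real k ^ l) + 4 * real k * real k ^ m * real m - 4 * real k * (\<Sum>l<m. real k ^ l)))"
proof -
  define a where "a = real k ^ m * real k ^ m * (2 * 2 ^ m * (real k - 1))
      + real k ^ m / real k * (2 * (real k - 2) * (real k - 1) * (\<Sum>l<m. (2 * real k) ^ l)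
          + 2 * real k * real k ^ m * (real k - 2) * (\<Sum>l<m. 2 ^ l) - 2 * real k * (real k - 2) * (\<Sum>l<m. (2 * real k) ^ l))"
  define b where "b = 2 * real k ^ m * real k ^ m
          + real k ^ m / real k * (2 * (real k - 2) * (\<Sum>l<m. real k ^ l) + 4 * real k * real k ^ m * real m - 4 * real k * (\<Sum>l<m. real k ^ l))"
  have "real (\<Sum>u\<in>words {0..<k} n. \<Sum>w\<in>words {0..<k} n. D k n u w)
      = (\<Sum>i<k - 1. real (\<Sum>j\<le>n. \<Sum>\<tau>\<in>T k n i j. Asum k i j + 2 * (k ^ n - k ^ j) * Sd k i j (dflt i j \<tau>)))"
    unfolding total_sum sum_blocks of_nat_sum ..
  also have "\<dots> = (\<Sum>i<k - 1. a + (real i * real (k - 2 - i)) * b)"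
  proof (rule sum.cong[OF refl])
    fix i assume "i \<in> {..<k - 1}"
    then have ik: "Suc i < k" by simp
    show "real (\<Sum>j\<le>n. \<Sum>\<tau>\<in>T k n i j. Asum k i j + 2 * (k ^ n - k ^ j) * Sd k i j (dflt i j \<tau>))
        = a + (real i * real (k - 2 - i)) * b"
      unfolding inner_real[OF ik n] a_def b_def by simp
  qed
  also have "\<dots> = real (k - 1) * a + (\<Sum>i<k - 1. real i * real (k - 2 - i)) * b"
    by (simp add: sum.distrib sum_distrib_right)
  also have "(\<Sum>i<k - 1. real i * real (k - 2 - i)) = (\<Sum>i<k - 1. real i * (real (k - 1) - 1 - real i))"
    by (rule sum.cong) (auto simp: of_nat_diff)
  also have "\<dots> = (real k - 1) * (real k - 2) * (real k - 3) / 6"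
    unfolding sum_ab using k2 by (simp add: of_nat_diff algebra_simps)
  also have "real (k - 1) = real k - 1" using k2 by (simp add: of_nat_diff)
  finally show ?thesis unfolding a_def b_def .
qed

theorem corollary5p8:
  fixes k n :: nat and orient :: "nat \<Rightarrow> bool"
  assumes "k \<ge> 1" and "n \<ge> 1"
  shows "wiener (words {0..<k} n) (schreier_adj {0..<k} (path_edges k orient) n) =
      (real k - 1)^2 * (2 * (real k)^2 - 2 * real k - 1) / ((real k)^3 * (2 * real k - 1))
        * 2^n * (real k)^(2*n)
    + (real k - 1) * (real k - 2) * (real k - 3) / (3 * (real k)^2) * real n * (real k)^(2*n)
    - (real k + 1) * (real k - 2) * ((real k)^2 + 2 * real k - 6) / (6 * (real k)^3) * (real k)^(2*n)
    + (real k + 1) * (real k - 2) * (2 * real k - 5) / (6 * real k * (2 * real k - 1)) * (real k)^n"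
proof -
  have W: "wiener (words {0..<k} n) (schreier_adj {0..<k} (path_edges k orient) n)
      = real (\<Sum>u\<in>words {0..<k} n. \<Sum>w\<in>words {0..<k} n. D k n u w) / 2"
    unfolding wiener_def by (simp add: graph_dist_D)
  show ?thesis
  proof (cases "k = 1")
    case True
    have "blocks k n = {}" unfolding blocks_def using True by auto
    then have "\<And>u w. D k n u w = 0" unfolding D_def by simp
    then show ?thesis unfolding W using True by simp
  next
    case False
    then have k2: "k \<ge> 2" using assms(1) by simp
    obtain m where n: "n = Suc m" using assms(2) by (cases n) auto
    define K where "K = real k"
    define X where "X = (2::real) ^ m"
    define Y where "Y = K ^ m"
    define G2K where "G2K = (\<Sum>l<m. (2 * K) ^ l)"
    define GK where "GK = (\<Sum>l<m. K ^ l)"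
    define G2 where "G2 = (\<Sum>l<m. (2::real) ^ l)"
    have K2: "K \<ge> 2" unfolding K_def using k2 by simp
    have h1: "G2K * (2 * K - 1) = X * Y - 1"
      using geom[of "2 * K" m] unfolding G2K_def X_def Y_def by (simp add: power_mult_distrib algebra_simps)
    have h2: "GK * (K - 1) = Y - 1"
      using geom[of K m] unfolding GK_def Y_def by (simp add: algebra_simps)
    have h3: "G2 = X - 1"
      using geom[of 2 m] unfolding G2_def X_def by simp
    have T: "real (\<Sum>u\<in>words {0..<k} n. \<Sum>w\<in>words {0..<k} n. D k n u w)
      = (K - 1) * (Y * Y * (2 * X * (K - 1)) + Y / K * (2 * (K - 2) * (K - 1) * G2K + 2 * K * Y * (K - 2) * G2 - 2 * K * (K - 2) * G2K))
        + (K - 1) * (K - 2) * (K - 3) / 6 * (2 * Y * Y + Y / K * (2 * (K - 2) * GK + 4 * K * Y * real m - 4 * K * GK))"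
      unfolding total_real[OF k2 n] K_def X_def Y_def G2K_def GK_def G2_def by (simp add: algebra_simps)
    have pw: "(2::real) ^ n = 2 * X" "K ^ (2 * n) = K^2 * Y^2" "real n = real m + 1" "K ^ n = K * Y"
      unfolding n X_def Y_def by (simp_all add: power_mult power_mult_distrib power2_eq_square)
    show ?thesis
      unfolding W T K_def[symmetric] pw
      using final_combine[OF K2 h1 h2 h3, of "real m"] by simp
  qed
qed


end
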